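(* Let $T$ be a tree on $n\geq 3$ vertices having exactly $p$ pendant vertices (vertices of degree $1$). Then $$\mathrm{rank}(\mathrm{Max4PC}_T)=2(n-p).$$
   Context: For a tree $T$ with vertex set $V$, $|V|=n$, let $d_{x,y}$ denote the distance (number of edges on the path) between vertices $x,y$ in $T$. The maximum four point condition matrix $\mathrm{Max4PC}_T$ is the $\binom{n}{2}\times\binom{n}{2}$ matrix whose rows and columns are indexed by the $2$-element subsets of $V$, and whose entry in the row indexed by $\{w,x\}$ and the column indexed by $\{y,z\}$ is $$\max\{d_{w,x}+d_{y,z},\ d_{w,y}+d_{x,z},\ d_{w,z}+d_{x,y}\}.$$ *)

theory Defs
  imports Main "Jordan_Normal_Form.DL_Rank"
begin

definition simple_graph :: "'a set \<Rightarrow> 'a set set \<Rightarrow> bool" where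
  "simple_graph V E \<longleftrightarrow> finite V \<and> (\<forall>e\<in>E. e \<subseteq> V \<and> card e = 2)"

definition walk :: "'a set set \<Rightarrow> 'a list \<Rightarrow> bool" where
  "walk E xs \<longleftrightarrow> xs \<noteq> [] \<and> (\<forall>i. Suc i < length xs \<longrightarrow> {xs ! i, xs ! Suc i} \<in> E)"

definition connected_graph :: "'a set \<Rightarrow> 'a set set \<Rightarrow> bool" where
  "connected_graph V E \<longleftrightarrow>
     (\<forall>x\<in>V. \<forall>y\<in>V. \<exists>xs. walk E xs \<and> hd xs = x \<and> last xs = y)"

definition is_cycle :: "'a set set \<Rightarrow> 'a list \<Rightarrow> bool" where
  "is_cycle E xs \<longleftrightarrow> walk E xs \<and> distinct xs \<and> length xs \<ge> 3 \<and> {last xs, hd xs} \<in> E"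

definition is_tree :: "'a set \<Rightarrow> 'a set set \<Rightarrow> bool" where
  "is_tree V E \<longleftrightarrow> simple_graph V E \<and> V \<noteq> {} \<and> connected_graph V E \<and> (\<nexists>xs. is_cycle E xs)"

definition dist :: "'a set set \<Rightarrow> 'a \<Rightarrow> 'a \<Rightarrow> nat" where
  "dist E x y = (LEAST k. \<exists>xs. walk E xs \<and> hd xs = x \<and> last xs = y \<and> length xs = Suc k)"

definition degree :: "'a set set \<Rightarrow> 'a \<Rightarrow> nat" where
  "degree E v = card {e\<in>E. v \<in> e}"

definition pendant_vertices :: "'a set \<Rightarrow> 'a set set \<Rightarrow> 'a set" where
  "pendant_vertices V E = {v\<in>V. degree E v = 1}"

definition pairs :: "'a set \<Rightarrow> 'a set set" where
  "pairs V = {e. e \<subseteq> V \<and> card e = 2}"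

(* entry of Max4PC at row {w,x} and column {y,z}; independent of the chosen labelling *)
definition max4pc_entry :: "'a set set \<Rightarrow> 'a set \<Rightarrow> 'a set \<Rightarrow> nat" where
  "max4pc_entry E e f =
     (let (w, x) = (SOME p. e = {fst p, snd p}); (y, z) = (SOME p. f = {fst p, snd p})
      in max (dist E w x + dist E y z) (max (dist E w y + dist E x z) (dist E w z + dist E x y)))"

(* an arbitrary fixed enumeration of a finite set by 0..<card; the rank does not depend on it *)
definition enum_of :: "'b set \<Rightarrow> nat \<Rightarrow> 'b" where
  "enum_of S = (SOME f. bij_betw f {0..<card S} S)"

definition Max4PC :: "'a set \<Rightarrow> 'a set set \<Rightarrow> real mat" where
  "Max4PC V E =
     (let N = card (pairs V); f = enum_of (pairs V)
      in mat N N (\<lambda>(i, j). real (max4pc_entry E (f i) (f j))))"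

definition real_mat_rank :: "real mat \<Rightarrow> nat" where
  "real_mat_rank A = vec_space.rank (dim_row A) A"

end

theory Submission
  imports Defs
begin

lemma walk_single[simp]: "walk E [x]"
  by (simp add: walk_def)

lemma walk_Nil[simp]: "\<not> walk E []"
  by (simp add: walk_def)

lemma walk_Cons_Cons: "walk E (x # y # xs) \<longleftrightarrow> {x, y} \<in> E \<and> walk E (y # xs)"
proof
  assume h: "walk E (x # y # xs)"
  have "{x,y} \<in> E" using h unfolding walk_def by (auto dest: spec[of _ 0])
  moreover have "walk E (y # xs)" unfolding walk_def
  proof (intro conjI allI impI)
    fix i assume "Suc i < length (y # xs)"
    then have "Suc (Suc i) < length (x # y # xs)" by simp
    then have "{(x # y # xs) ! Suc i, (x # y # xs) ! Suc (Suc i)} \<in> E" using h unfolding walk_def by blast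
    then show "{(y # xs) ! i, (y # xs) ! Suc i} \<in> E" by simp
  qed simp
  ultimately show "{x, y} \<in> E \<and> walk E (y # xs)" by simp
next
  assume h: "{x, y} \<in> E \<and> walk E (y # xs)"
  show "walk E (x # y # xs)" unfolding walk_def
  proof (intro conjI allI impI)
    fix i assume i: "Suc i < length (x # y # xs)"
    show "{(x # y # xs) ! i, (x # y # xs) ! Suc i} \<in> E"
    proof (cases i)
      case 0 then show ?thesis using h by simp
    next
      case (Suc j)
      then have "Suc j < length (y # xs)" using i by simp
      then show ?thesis using h Suc unfolding walk_def by simp
    qed
  qed simp
qed

lemma walk_Cons: "xs \<noteq> [] \<Longrightarrow> walk E (x # xs) \<longleftrightarrow> {x, hd xs} \<in> E \<and> walk E xs"
  by (cases xs) (auto simp: walk_Cons_Cons)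

lemma walk_append: "walk E xs \<Longrightarrow> walk E ys \<Longrightarrow> {last xs, hd ys} \<in> E \<Longrightarrow> walk E (xs @ ys)"
proof (induction xs)
  case Nil then show ?case by simp
next
  case (Cons x xs)
  show ?case
  proof (cases "xs = []")
    case True
    then show ?thesis using Cons.prems by (cases ys) (auto simp: walk_Cons_Cons)
  next
    case False
    then have "walk E xs" "{x, hd xs} \<in> E" using Cons.prems walk_Cons[OF False] by auto
    then have "walk E (xs @ ys)" using Cons False by simp
    then show ?thesis using \<open>{x, hd xs} \<in> E\<close> False by (simp add: walk_Cons)
  qed
qed

lemma walk_rev: "walk E xs \<Longrightarrow> walk E (rev xs)"
proof (induction xs)
  case Nil then show ?case by simp
next
  case (Cons x xs)
  show ?case
  proof (cases "xs = []")
    case True then show ?thesis by simp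
  next
    case False
    then have "walk E xs" "{x, hd xs} \<in> E" using Cons.prems walk_Cons[OF False] by auto
    then have "walk E (rev xs)" using Cons by simp
    moreover have "{last (rev xs), hd [x]} \<in> E" using \<open>{x, hd xs} \<in> E\<close> False
      by (simp add: last_rev insert_commute)
    ultimately show ?thesis using walk_append[of E "rev xs" "[x]"] by simp
  qed
qed

lemma walk_glue: "walk E xs \<Longrightarrow> walk E ys \<Longrightarrow> last xs = hd ys \<Longrightarrow> walk E (xs @ tl ys)"
proof (cases "tl ys = []")
  case True then show "walk E xs \<Longrightarrow> walk E ys \<Longrightarrow> last xs = hd ys \<Longrightarrow> walk E (xs @ tl ys)" by simp
next
  case False
  assume a: "walk E xs" "walk E ys" "last xs = hd ys"
  obtain y ys' where ys: "ys = y # ys'" using a(2) by (cases ys) auto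
  then have "ys' \<noteq> []" using False by simp
  then have "{y, hd ys'} \<in> E" "walk E ys'" using a(2) ys walk_Cons[OF \<open>ys' \<noteq> []\<close>] by auto
  then show ?thesis using a ys walk_append[of E xs ys'] by simp
qed

lemma walk_set: "walk E xs \<Longrightarrow> z \<in> set xs \<Longrightarrow> \<forall>e\<in>E. e \<subseteq> V \<Longrightarrow> hd xs \<in> V \<Longrightarrow> z \<in> V"
proof (induction xs)
  case Nil then show ?case by simp
next
  case (Cons x xs)
  show ?case
  proof (cases "xs = []")
    case True then show ?thesis using Cons by simp
  next
    case False
    then have "walk E xs" "{x, hd xs} \<in> E" using Cons.prems walk_Cons[OF False] by auto
    then have "hd xs \<in> V" using Cons.prems(3) by blast
    then show ?thesis using Cons \<open>walk E xs\<close> by auto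
  qed
qed

lemma dist_le_walk: "walk E xs \<Longrightarrow> hd xs = x \<Longrightarrow> last xs = y \<Longrightarrow> dist E x y \<le> length xs - 1"
  unfolding dist_def
  by (rule Least_le) (cases xs, auto)

lemma dist_walk_ex: "walk E xs \<Longrightarrow> hd xs = x \<Longrightarrow> last xs = y \<Longrightarrow>
   \<exists>ys. walk E ys \<and> hd ys = x \<and> last ys = y \<and> length ys = Suc (dist E x y)"
  unfolding dist_def
proof (rule LeastI_ex)
  assume "walk E xs" "hd xs = x" "last xs = y"
  then show "\<exists>k ys. walk E ys \<and> hd ys = x \<and> last ys = y \<and> length ys = Suc k"
    by (intro exI[of _ "length xs - 1"] exI[of _ xs]) (cases xs, auto)
qed


locale tree =
  fixes V :: "'a set" and E :: "'a set set"
  assumes tree: "is_tree V E"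
begin

abbreviation "d \<equiv> dist E"

lemma finV: "finite V" using tree unfolding is_tree_def simple_graph_def by blast

lemma edge_sub: "e \<in> E \<Longrightarrow> e \<subseteq> V" using tree unfolding is_tree_def simple_graph_def by blast
lemma edge_card: "e \<in> E \<Longrightarrow> card e = 2" using tree unfolding is_tree_def simple_graph_def by blast
lemma edges_sub: "\<forall>e\<in>E. e \<subseteq> V" using edge_sub by blast

lemma finE: "finite E"
proof -
  have "E \<subseteq> Pow V" using edge_sub by auto
  moreover have "finite (Pow V)" using finV by simp
  ultimately show ?thesis using finite_subset by auto
qed

lemma adj_neq: "{x,y} \<in> E \<Longrightarrow> x \<noteq> y"
proof
  assume "{x,y} \<in> E" "x = y"
  then have "card {x} = 2" using edge_card by force
  then show False by simp
qed

lemma adj_V: "{x,y} \<in> E \<Longrightarrow> x \<in> V" "{x,y} \<in> E \<Longrightarrow> y \<in> V"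
  using edge_sub[of "{x,y}"] by simp_all

lemma no_cycle: "\<not> is_cycle E xs" using tree unfolding is_tree_def by blast

lemma conn: "x \<in> V \<Longrightarrow> y \<in> V \<Longrightarrow> \<exists>xs. walk E xs \<and> hd xs = x \<and> last xs = y"
  using tree unfolding is_tree_def connected_graph_def by blast

lemma shortest: "x \<in> V \<Longrightarrow> y \<in> V \<Longrightarrow> \<exists>xs. walk E xs \<and> hd xs = x \<and> last xs = y \<and> length xs = Suc (d x y)"
proof -
  assume "x \<in> V" "y \<in> V"
  then obtain xs where "walk E xs" "hd xs = x" "last xs = y" using conn by blast
  then show ?thesis by (rule dist_walk_ex)
qed

lemma d_refl[simp]: "d x x = 0"
  using dist_le_walk[of E "[x]" x x] by simp

lemma d_le_sym: "x \<in> V \<Longrightarrow> y \<in> V \<Longrightarrow> d y x \<le> d x y"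
proof -
  assume "x \<in> V" "y \<in> V"
  then obtain xs where xs: "walk E xs" "hd xs = x" "last xs = y" "length xs = Suc (d x y)"
    using shortest by blast
  then have "xs \<noteq> []" by auto
  then have "walk E (rev xs)" "hd (rev xs) = y" "last (rev xs) = x"
    using xs walk_rev by (auto simp: hd_rev last_rev)
  then have "d y x \<le> length (rev xs) - 1" using dist_le_walk[of E "rev xs" y x] by simp
  then show ?thesis using xs by simp
qed

lemma d_sym: "x \<in> V \<Longrightarrow> y \<in> V \<Longrightarrow> d x y = d y x"
  using d_le_sym by (simp add: le_antisym)

lemma d_tri: "x \<in> V \<Longrightarrow> y \<in> V \<Longrightarrow> z \<in> V \<Longrightarrow> d x z \<le> d x y + d y z"
proof -
  assume V: "x \<in> V" "y \<in> V" "z \<in> V"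
  obtain xs where xs: "walk E xs" "hd xs = x" "last xs = y" "length xs = Suc (d x y)"
    using shortest V by blast
  obtain ys where ys: "walk E ys" "hd ys = y" "last ys = z" "length ys = Suc (d y z)"
    using shortest V by blast
  have w: "walk E (xs @ tl ys)" using walk_glue xs ys by metis
  have "hd (xs @ tl ys) = x" using xs by (cases xs) auto
  moreover have "last (xs @ tl ys) = z"
    using xs ys by (cases ys) (auto)
  ultimately have "d x z \<le> length (xs @ tl ys) - 1" using dist_le_walk[OF w] by simp
  then show ?thesis using xs ys by simp
qed

lemma d_zero: "x \<in> V \<Longrightarrow> y \<in> V \<Longrightarrow> d x y = 0 \<Longrightarrow> x = y"
proof -
  assume "x \<in> V" "y \<in> V" "d x y = 0"
  then obtain xs where xs: "walk E xs" "hd xs = x" "last xs = y" "length xs = 1"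
    using shortest[of x y] by auto
  then show "x = y" by (cases xs) auto
qed

lemma d_adj: "{x,y} \<in> E \<Longrightarrow> d x y = 1"
proof -
  assume e: "{x,y} \<in> E"
  then have "walk E [x,y]" by (simp add: walk_Cons_Cons)
  then have "d x y \<le> 1" using dist_le_walk[of E "[x,y]" x y] by simp
  moreover have "d x y \<noteq> 0" using d_zero adj_neq adj_V e by blast
  ultimately show ?thesis by simp
qed

lemma adj_sym: "{x,y} \<in> E \<Longrightarrow> {y,x} \<in> E" by (simp add: insert_commute)

lemma d_step: "x \<in> V \<Longrightarrow> y \<in> V \<Longrightarrow> d x y = Suc k \<Longrightarrow> \<exists>x'. {x,x'} \<in> E \<and> d x' y = k"
proof -
  assume V: "x \<in> V" "y \<in> V" and k: "d x y = Suc k"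
  obtain xs where xs: "walk E xs" "hd xs = x" "last xs = y" "length xs = Suc (d x y)"
    using shortest V by blast
  define xs' where "xs' = tl xs"
  have "length xs' = Suc k" using xs k unfolding xs'_def by simp
  have "xs \<noteq> []" using xs(4) by auto
  have xs'ne: "xs' \<noteq> []" using \<open>length xs' = Suc k\<close> by auto
  have xs': "xs = x # xs'" "xs' \<noteq> []"
    using \<open>xs \<noteq> []\<close> xs(2) xs'ne unfolding xs'_def by auto
  then have e: "{x, hd xs'} \<in> E" and w: "walk E xs'" using xs walk_Cons[OF xs'(2)] by auto
  have "d (hd xs') y \<le> length xs' - 1" using dist_le_walk[OF w] xs xs' by simp
  then have le: "d (hd xs') y \<le> k" using xs xs' k by simp
  have "d x y \<le> d x (hd xs') + d (hd xs') y" using d_tri V adj_V(2)[OF e] by blast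
  then have "k \<le> d (hd xs') y" using d_adj[OF e] k by simp
  then show ?thesis using le e by (intro exI[of _ "hd xs'"]) simp
qed

lemma d_adj_le: "{a,b} \<in> E \<Longrightarrow> u \<in> V \<Longrightarrow> d u a \<le> d u b + 1"
  using d_tri[of u b a] adj_V d_adj[OF adj_sym] by fastforce

lemma no_equal_path:
  assumes r: "r \<in> V"
  shows "\<And>x y Q. x \<in> V \<Longrightarrow> y \<in> V \<Longrightarrow> d r x = t \<Longrightarrow> d r y = t \<Longrightarrow> x \<noteq> y \<Longrightarrow> walk E Q \<Longrightarrow> distinct Q
     \<Longrightarrow> hd Q = x \<Longrightarrow> last Q = y \<Longrightarrow> (\<forall>z\<in>set Q. z \<noteq> x \<longrightarrow> z \<noteq> y \<longrightarrow> t < d r z) \<Longrightarrow> False"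
proof (induction t)
  case 0
  then have "x = r" "y = r" using d_zero r by (metis d_sym)+
  then show ?case using 0 by simp
next
  case (Suc t)
  have QV: "set Q \<subseteq> V" using walk_set[OF Suc.prems(6) _ edges_sub] Suc.prems by blast
  obtain x' where x': "{x,x'} \<in> E" "d x' r = t" using d_step[of x r t] Suc.prems r d_sym by metis
  obtain y' where y': "{y,y'} \<in> E" "d y' r = t" using d_step[of y r t] Suc.prems r d_sym by metis
  have x'V: "x' \<in> V" "y' \<in> V" using x' y' adj_V by blast+
  have dx': "d r x' = t" "d r y' = t" using x' y' x'V r d_sym by metis+
  have x'Q: "x' \<notin> set Q" using Suc.prems(10) Suc.prems(3,4) dx' by fastforce
  have y'Q: "y' \<notin> set Q" using Suc.prems(10) Suc.prems(3,4) dx' by fastforce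
  have Qne: "Q \<noteq> []" using Suc.prems(6) by auto
  show False
  proof (cases "x' = y'")
    case True
    have "walk E (x' # Q)" using walk_Cons[OF Qne] Suc.prems x' by (auto simp: insert_commute)
    moreover have "distinct (x' # Q)" using x'Q Suc.prems(7) by simp
    moreover have "length (x' # Q) \<ge> 3"
    proof -
      have "length Q \<noteq> 1" using Suc.prems(5,8,9) by (cases Q) auto
      moreover have "length Q > 0" using Qne by simp
      ultimately have "length Q \<ge> 2" by linarith
      then show ?thesis by simp
    qed
    moreover have "{last (x' # Q), hd (x' # Q)} \<in> E" using Qne Suc.prems(9) y' True by simp
    ultimately have "is_cycle E (x' # Q)" unfolding is_cycle_def by blast
    then show False using no_cycle by blast
  next
    case False
    let ?Q = "x' # Q @ [y']"
    have "walk E (Q @ [y'])" using walk_append[of E Q "[y']"] Suc.prems y' by simp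
    then have w: "walk E ?Q" using walk_Cons[of "Q @ [y']" E x'] Suc.prems(8) Qne x' by (auto simp: insert_commute)
    have dQ: "distinct ?Q" using False x'Q y'Q Suc.prems(7) by simp
    have "\<forall>z\<in>set ?Q. z \<noteq> x' \<longrightarrow> z \<noteq> y' \<longrightarrow> t < d r z"
    proof (intro ballI impI)
      fix z assume "z \<in> set ?Q" "z \<noteq> x'" "z \<noteq> y'"
      then have "z \<in> set Q" by simp
      then show "t < d r z" using Suc.prems(3,4,10) by fastforce
    qed
    then show False using Suc.IH[OF x'V dx' False w dQ] Qne by simp
  qed
qed

lemma edge_d_neq: "{a,b} \<in> E \<Longrightarrow> r \<in> V \<Longrightarrow> d r a \<noteq> d r b"
proof
  assume e: "{a,b} \<in> E" and r: "r \<in> V" and eq: "d r a = d r b"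
  have "walk E [a,b]" using e by (simp add: walk_Cons_Cons)
  moreover have "a \<in> V" "b \<in> V" "a \<noteq> b" using e adj_V adj_neq by auto
  ultimately show False
    by (intro no_equal_path[OF r, of a b "d r a" "[a,b]"]) (use eq in auto)
qed

lemma edge_d_cases: "{a,b} \<in> E \<Longrightarrow> r \<in> V \<Longrightarrow> d r a = d r b + 1 \<or> d r b = d r a + 1"
proof -
  assume "{a,b} \<in> E" "r \<in> V"
  then have "d r a \<noteq> d r b" "d r a \<le> d r b + 1" "d r b \<le> d r a + 1"
    using edge_d_neq d_adj_le adj_sym by blast+
  then show ?thesis by linarith
qed

lemma parent_unique:
  assumes r: "r \<in> V" and e1: "{v,w1} \<in> E" and e2: "{v,w2} \<in> E"
    and eq: "d r w1 = d r w2" and lt: "d r w1 < d r v"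
  shows "w1 = w2"
proof (rule ccontr)
  assume ne: "w1 \<noteq> w2"
  have "walk E [w1,v,w2]" using e1 e2 by (simp add: walk_Cons_Cons insert_commute)
  moreover have "distinct [w1,v,w2]" using ne adj_neq e1 e2 by auto
  moreover have "w1 \<in> V" "w2 \<in> V" using e1 e2 adj_V by auto
  ultimately show False
    by (intro no_equal_path[OF r, of w1 w2 "d r w1" "[w1,v,w2]"]) (use eq lt ne in auto)
qed

end

definition eA :: "'a set \<Rightarrow> 'a" where "eA e = fst (SOME p. e = {fst p, snd p} \<and> fst p \<noteq> snd p)"
definition eB :: "'a set \<Rightarrow> 'a" where "eB e = snd (SOME p. e = {fst p, snd p} \<and> fst p \<noteq> snd p)"

context tree begin

lemma eAB: assumes "e \<in> E" shows "e = {eA e, eB e}" "eA e \<noteq> eB e"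
proof -
  obtain a b where ab: "a \<noteq> b" "e = {a,b}" using edge_card[OF assms] card_2_iff by metis
  then have ex: "\<exists>p. e = {fst p, snd p} \<and> fst p \<noteq> snd p" by (intro exI[of _ "(a,b)"]) simp
  show "e = {eA e, eB e}" "eA e \<noteq> eB e"
    using someI_ex[OF ex] unfolding eA_def eB_def by auto
qed

lemma eAB_E: "e \<in> E \<Longrightarrow> {eA e, eB e} \<in> E" using eAB by simp

lemma eAB_V: "e \<in> E \<Longrightarrow> eA e \<in> V" "e \<in> E \<Longrightarrow> eB e \<in> V"
  using eAB_E adj_V by blast+

definition side :: "'a set \<Rightarrow> 'a \<Rightarrow> bool" where
  "side e u \<longleftrightarrow> d u (eB e) < d u (eA e)"

lemma side_A:
  assumes ab: "{a,b} \<in> E" and u: "u \<in> V" and "d u a < d u b" and uu: "{u,u'} \<in> E" and ne: "{u,u'} \<noteq> {a,b}"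
  shows "d u' a < d u' b"
proof (rule ccontr)
  assume "\<not> d u' a < d u' b"
  have V: "a \<in> V" "b \<in> V" "u' \<in> V" using ab uu adj_V by blast+
  have c1: "d u b = d u a + 1" using edge_d_cases[OF ab u] assms(3) by auto
  have c2: "d u' a = d u' b + 1" using edge_d_cases[OF ab V(3)] \<open>\<not> d u' a < d u' b\<close> by auto
  have t1: "d u' a \<le> d u' u + d u a" using d_tri V u by blast
  have t2: "d u b \<le> d u u' + d u' b" using d_tri V u by blast
  have duu: "d u u' = 1" "d u' u = 1" using d_adj uu adj_sym by blast+
  have eq1: "d u' b = d u a" using c1 c2 t1 t2 duu by linarith
  have eq2: "d u' a = d u a + 1" using eq1 c2 by simp
  show False
  proof (cases "d u a")
    case 0
    then have "u = a" using d_zero u V by blast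
    moreover have "u' = b" using eq1 0 d_zero V by simp
    ultimately show False using ne by simp
  next
    case (Suc x0)
    have "d b u' = Suc x0" using eq1 Suc d_sym V by simp
    then obtain z where z: "{b,z} \<in> E" "d z u' = x0" using d_step V by blast
    have zV: "z \<in> V" using z adj_V by blast
    have "d u z \<le> d u u' + d u' z" using d_tri u V zV by blast
    moreover have "d u' z = x0" using z d_sym zV V by simp
    moreover have "d u b \<le> d u z + d z b" using d_tri u V zV by blast
    moreover have "d z b = 1" using d_adj z adj_sym by blast
    ultimately have dz: "d u z = d u a" using c1 Suc duu by linarith
    have "a = z" by (rule parent_unique[OF u adj_sym[OF ab] z(1)]) (use dz c1 in simp_all)
    then show False using z eq2 Suc d_sym V by simp
  qed
qed

lemma side_eq:
  assumes e: "e \<in> E" and u: "u \<in> V" and uu: "{u,u'} \<in> E" and ne: "e \<noteq> {u,u'}"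
  shows "side e u = side e u'"
proof -
  have ab: "{eA e, eB e} \<in> E" "{eB e, eA e} \<in> E" using eAB_E[OF e] adj_sym by blast+
  have ne1: "{u,u'} \<noteq> {eA e, eB e}" "{u,u'} \<noteq> {eB e, eA e}" using ne eAB[OF e] by (auto simp: insert_commute)
  have u': "u' \<in> V" using uu adj_V by blast
  have n1: "d u (eA e) \<noteq> d u (eB e)" "d u' (eA e) \<noteq> d u' (eB e)" using edge_d_neq ab u u' by blast+
  show ?thesis unfolding side_def
    using side_A[OF ab(1) u _ uu ne1(1)] side_A[OF ab(2) u _ uu ne1(2)] n1 by linarith
qed

lemma side_endpoint: assumes e: "e \<in> E" and w: "w \<in> e" shows "side e w \<longleftrightarrow> w = eB e"
proof -
  have "w = eA e \<or> w = eB e" using eAB[OF e] w by blast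
  then show ?thesis unfolding side_def using d_adj eAB_E[OF e] adj_sym eAB[OF e] by auto
qed

lemma side_towards:
  assumes uu: "{u,u'} \<in> E" and v: "v \<in> V" and lt: "d v u' < d v u"
  shows "side {u,u'} v = side {u,u'} u'"
proof -
  have e: "{u,u'} \<in> E" by (rule uu)
  have "eB {u,u'} = u \<or> eB {u,u'} = u'" "eA {u,u'} = u \<or> eA {u,u'} = u'" "eA {u,u'} \<noteq> eB {u,u'}"
    using eAB[OF e] by (auto simp: doubleton_eq_iff)
  moreover have "side {u,u'} u' \<longleftrightarrow> u' = eB {u,u'}" using side_endpoint[OF e] by simp
  ultimately show ?thesis unfolding side_def using lt by auto
qed

lemma cross_dist:
  assumes ab: "{a,b} \<in> E" and v: "v \<in> V"  and vb: "d v b < d v a"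
  shows "u \<in> V \<Longrightarrow> d u a < d u b \<Longrightarrow> d u v = d u a + 1 + d b v"
proof (induction "d u v" arbitrary: u)
  case 0
  then have "u = v" using d_zero v by simp
  then show ?case using 0 vb by simp
next
  case (Suc k)
  have V: "a \<in> V" "b \<in> V" using ab adj_V by blast+
  obtain u' where u': "{u,u'} \<in> E" "d u' v = k" using d_step[of u v k] Suc v by metis
  have u'V: "u' \<in> V" using u' adj_V by blast
  show ?case
  proof (cases "{u,u'} = {a,b}")
    case True
    have "u \<noteq> b" using Suc.prems d_adj ab by (auto simp: insert_commute)
    then have "u = a" "u' = b" using True by (auto simp: doubleton_eq_iff)
    then show ?thesis using Suc.hyps u' by simp
  next
    case False
    have "d u' a < d u' b" using side_A[OF ab Suc.prems(1) Suc.prems(2) u'(1) False] .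
    then have IH: "d u' v = d u' a + 1 + d b v" using Suc.hyps(1)[of u'] u' u'V by simp
    have "d u a \<le> d u u' + d u' a" using d_tri Suc.prems V u'V by blast
    moreover have "d u v \<le> d u a + d a b + d b v"
      using d_tri[of u a v] d_tri[of a b v] Suc.prems V v by fastforce
    moreover have "d a b = 1" "d u u' = 1" using d_adj ab u' by blast+
    ultimately show ?thesis using IH Suc.hyps(2) u' by linarith
  qed
qed

lemma side_cross:
  assumes e: "e \<in> E" and u: "u \<in> V" and v: "v \<in> V" and su: "\<not> side e u" and sv: "side e v"
  shows "d u v = d u (eA e) + 1 + d (eB e) v"
proof -
  have ab: "{eA e, eB e} \<in> E" using eAB_E[OF e] .
  have "d u (eA e) \<noteq> d u (eB e)" using edge_d_neq ab u by blast
  then have "d u (eA e) < d u (eB e)" using su unfolding side_def by linarith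
  then show ?thesis using cross_dist[OF ab v] sv u unfolding side_def by blast
qed

end

definition sep :: "bool \<Rightarrow> bool \<Rightarrow> nat" where "sep p q = (if p \<noteq> q then 1 else 0)"

definition pe :: "bool \<Rightarrow> bool \<Rightarrow> bool \<Rightarrow> bool \<Rightarrow> nat" where
  "pe w x y z = max (sep w x + sep y z) (max (sep w y + sep x z) (sep w z + sep x y))"

lemma pe1: "\<not> (w = x \<and> y = z \<and> w \<noteq> y) \<Longrightarrow> pe w x y z = sep w x + sep y z"
  unfolding pe_def sep_def by (cases w; cases x; cases y; cases z) simp_all

lemma pe2: "\<not> (w = y \<and> x = z \<and> w \<noteq> x) \<Longrightarrow> pe w x y z = sep w y + sep x z"
  unfolding pe_def sep_def by (cases w; cases x; cases y; cases z) simp_all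

context tree begin

lemma d_card: "u \<in> V \<Longrightarrow> v \<in> V \<Longrightarrow> d u v = card {e\<in>E. side e u \<noteq> side e v}"
proof (induction "d u v" arbitrary: u)
  case 0
  then have "u = v" using d_zero by simp
  then show ?case using 0 by simp
next
  case (Suc k)
  obtain u' where u': "{u,u'} \<in> E" "d u' v = k" using d_step[of u v k] Suc by metis
  have u'V: "u' \<in> V" using u' adj_V by blast
  have IH: "k = card {e\<in>E. side e u' \<noteq> side e v}" using Suc.hyps(1)[of u'] u' u'V Suc.prems by simp
  have neq: "u \<noteq> u'" using adj_neq u' by blast
  have s1: "side {u,u'} v = side {u,u'} u'"
    using side_towards[OF u'(1) Suc.prems(2)] u' Suc.hyps(2) d_sym Suc.prems u'V by simp
  have s2: "side {u,u'} u \<noteq> side {u,u'} u'"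
  proof -
    have "eB {u,u'} \<in> {u,u'}" using eAB[OF u'(1)] by blast
    then show ?thesis using side_endpoint[OF u'(1)] neq by auto
  qed
  have eq: "{e\<in>E. side e u \<noteq> side e v} = insert {u,u'} {e\<in>E. side e u' \<noteq> side e v}"
  proof (intro equalityI subsetI)
    fix e assume "e \<in> {e\<in>E. side e u \<noteq> side e v}"
    then show "e \<in> insert {u,u'} {e\<in>E. side e u' \<noteq> side e v}"
      using side_eq[OF _ Suc.prems(1) u'(1)] by auto
  next
    fix e assume "e \<in> insert {u,u'} {e\<in>E. side e u' \<noteq> side e v}"
    then show "e \<in> {e\<in>E. side e u \<noteq> side e v}"
      using side_eq[OF _ Suc.prems(1) u'(1)] s1 s2 u'(1) by auto
  qed
  have notin: "{u,u'} \<notin> {e\<in>E. side e u' \<noteq> side e v}" using s1 by simp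
  have fin: "finite {e\<in>E. side e u' \<noteq> side e v}" using finE by simp
  show ?case using eq notin fin IH Suc.hyps(2) by simp
qed

lemma d_sum: "u \<in> V \<Longrightarrow> v \<in> V \<Longrightarrow> d u v = (\<Sum>e\<in>E. sep (side e u) (side e v))"
proof -
  assume "u \<in> V" "v \<in> V"
  then have "d u v = card {e\<in>E. side e u \<noteq> side e v}" by (rule d_card)
  also have "\<dots> = (\<Sum>e\<in>{e\<in>E. side e u \<noteq> side e v}. 1)" by simp
  also have "\<dots> = (\<Sum>e\<in>E. if side e u \<noteq> side e v then 1 else 0)"
    by (rule sum.inter_filter[OF finE])
  also have "\<dots> = (\<Sum>e\<in>E. sep (side e u) (side e v))"
    unfolding sep_def by simp
  finally show ?thesis .
qed

lemma laminar:
  assumes e: "e \<in> E" and f: "f \<in> E" and ne: "e \<noteq> f"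
  shows "\<exists>p q. \<forall>u\<in>V. \<not> (side e u = p \<and> side f u = q)"
proof -
  let ?a = "eA e" and ?b = "eB e" and ?a' = "eA f" and ?b' = "eB f"
  have abE: "{?a,?b} \<in> E" "{?a',?b'} \<in> E" using eAB_E e f by blast+
  have V: "?a \<in> V" "?b \<in> V" "?a' \<in> V" "?b' \<in> V" using eAB_V e f by blast+
  have q0: "side f ?a = side f ?b" using side_eq[OF f V(1) abE(1)] ne eAB[OF e] by simp
  have p0: "side e ?a' = side e ?b'" using side_eq[OF e V(3) abE(2)] ne eAB[OF f] by simp
  have sa: "\<not> side e ?a" "side e ?b" using side_endpoint[OF e] eAB[OF e] by auto
  have key: "side f u = side f ?a" if u: "u \<in> V" and su: "side e u = (\<not> side e ?a')" for u
  proof (cases "side e ?a'")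
    case True
    then have "\<not> side e u" using su by simp
    then have d1: "d u ?a' = d u ?a + 1 + d ?b ?a'" and d2: "d u ?b' = d u ?a + 1 + d ?b ?b'"
      using side_cross[OF e u] V True p0 by auto
    show ?thesis using d1 d2 q0 unfolding side_def by (simp add: d_sym V u)
  next
    case False
    then have "side e u" using su by simp
    then have d1: "d ?a' u = d ?a' ?a + 1 + d ?b u" and d2: "d ?b' u = d ?b' ?a + 1 + d ?b u"
      using side_cross[OF e _ u] V False p0 by auto
    have "side f u \<longleftrightarrow> d ?b' u < d ?a' u" unfolding side_def using d_sym V u by simp
    also have "\<dots> \<longleftrightarrow> d ?b' ?a < d ?a' ?a" using d1 d2 by simp
    also have "\<dots> \<longleftrightarrow> side f ?a" unfolding side_def using d_sym V by simp
    finally show ?thesis .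
  qed
  show ?thesis
    by (intro exI[of _ "\<not> side e ?a'"] exI[of _ "\<not> side f ?a"]) (use key in auto)
qed

lemma four_point:
  assumes V: "w \<in> V" "x \<in> V" "y \<in> V" "z \<in> V"
  shows "max (d w x + d y z) (max (d w y + d x z) (d w z + d x y))
       = (\<Sum>e\<in>E. pe (side e w) (side e x) (side e y) (side e z))"
proof -
  let ?s = "\<lambda>e. side e"
  define S1 where "S1 = (\<Sum>e\<in>E. sep (side e w) (side e x) + sep (side e y) (side e z))"
  define S2 where "S2 = (\<Sum>e\<in>E. sep (side e w) (side e y) + sep (side e x) (side e z))"
  define S3 where "S3 = (\<Sum>e\<in>E. sep (side e w) (side e z) + sep (side e x) (side e y))"
  define P where "P = (\<Sum>e\<in>E. pe (side e w) (side e x) (side e y) (side e z))"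
  have e1: "d w x + d y z = S1" unfolding S1_def using d_sum V by (simp add: sum.distrib)
  have e2: "d w y + d x z = S2" unfolding S2_def using d_sum V by (simp add: sum.distrib)
  have e3: "d w z + d x y = S3" unfolding S3_def using d_sum V by (simp add: sum.distrib)
  have l1: "S1 \<le> P" unfolding S1_def P_def by (rule sum_mono) (simp add: pe_def)
  have l2: "S2 \<le> P" unfolding S2_def P_def by (rule sum_mono) (simp add: pe_def)
  have l3: "S3 \<le> P" unfolding S3_def P_def by (rule sum_mono) (simp add: pe_def)
  have "S1 = P \<or> S2 = P"
  proof (cases "\<exists>e\<in>E. side e w = side e x \<and> side e y = side e z \<and> side e w \<noteq> side e y")
    case False
    then have "S1 = P" unfolding S1_def P_def by (intro sum.cong refl) (simp add: pe1)
    then show ?thesis by simp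
  next
    case True
    then obtain e where e: "e \<in> E" "side e w = side e x" "side e y = side e z" "side e w \<noteq> side e y"
      by blast
    have "\<not> (side f w = side f y \<and> side f x = side f z \<and> side f w \<noteq> side f x)" if f: "f \<in> E" for f
    proof
      assume h: "side f w = side f y \<and> side f x = side f z \<and> side f w \<noteq> side f x"
      show False
      proof (cases "e = f")
        case True then show False using e h by simp
      next
        case False
        then obtain p q where pq: "\<forall>u\<in>V. \<not> (side e u = p \<and> side f u = q)"
          using laminar[OF e(1) f] by blast
        have n: "\<not> (side e w = p \<and> side f w = q)" "\<not> (side e x = p \<and> side f x = q)"
          "\<not> (side e y = p \<and> side f y = q)" "\<not> (side e z = p \<and> side f z = q)"
          using pq V by blast+
        show False using n e(2-4) h by (cases p; cases q; cases "side e w"; cases "side f w") simp_all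
      qed
    qed
    then have "S2 = P" unfolding S2_def P_def by (intro sum.cong refl) (simp add: pe2)
    then show ?thesis by simp
  qed
  then show ?thesis using e1 e2 e3 l1 l2 l3 unfolding P_def[symmetric] by linarith
qed

end

context tree begin

lemma edge_other: "e \<in> E \<Longrightarrow> v \<in> e \<Longrightarrow> \<exists>w. e = {v,w}"
  using eAB by (metis insert_commute insert_iff singletonD)

lemma deg1_edge:
  assumes "degree E v = 1"
  obtains w where "{v,w} \<in> E" "\<And>e. e \<in> E \<Longrightarrow> v \<in> e \<Longrightarrow> e = {v,w}"
proof -
  have "card {e\<in>E. v \<in> e} = 1" using assms unfolding degree_def .
  then obtain e0 where e0: "{e\<in>E. v \<in> e} = {e0}" by (rule card_1_singletonE)
  have "e0 \<in> {e\<in>E. v \<in> e}" using e0 by simp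
  then have "e0 \<in> E" "v \<in> e0" by simp_all
  then obtain w where w: "e0 = {v,w}" using edge_other by blast
  show ?thesis
  proof (rule that)
    show "{v,w} \<in> E" using \<open>e0 \<in> E\<close> w by simp
    fix e assume "e \<in> E" "v \<in> e"
    then have "e \<in> {e\<in>E. v \<in> e}" by simp
    then show "e = {v,w}" using e0 w by simp
  qed
qed

lemma leaf_adj_unique: "degree E v = 1 \<Longrightarrow> {v,w} \<in> E \<Longrightarrow> {v,w'} \<in> E \<Longrightarrow> w = w'"
proof -
  assume a: "degree E v = 1" "{v,w} \<in> E" "{v,w'} \<in> E"
  obtain m where "\<And>e. e \<in> E \<Longrightarrow> v \<in> e \<Longrightarrow> e = {v,m}" using deg1_edge[OF a(1)] by blast
  then have "{v,w} = {v,m}" "{v,w'} = {v,m}" using a by auto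
  then show "w = w'" using adj_neq a by (metis doubleton_eq_iff)
qed

lemma two_leaves:
  assumes card3: "card V \<ge> 3" and e: "{l,m} \<in> E" and dl: "degree E l = 1" and dm: "degree E m = 1"
  shows False
proof -
  have V: "l \<in> V" "m \<in> V" using e adj_V by blast+
  have "\<not> V \<subseteq> {l,m}"
  proof
    assume "V \<subseteq> {l,m}"
    then have "card V \<le> card {l,m}" by (rule card_mono[rotated]) simp
    moreover have "card {l,m} \<le> 2" by (cases "l = m") simp_all
    ultimately show False using card3 by simp
  qed
  then obtain z where z: "z \<in> V" "z \<noteq> l" "z \<noteq> m" by blast
  have "d l z \<noteq> 0" using d_zero z V by blast
  then obtain k where k: "d l z = Suc k" by (cases "d l z") auto
  then obtain z' where z': "{l,z'} \<in> E" "d z' z = k" using d_step V z by blast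
  have "z' = m" using leaf_adj_unique[OF dl z'(1) e] .
  then have dmz: "d m z = k" using z' by simp
  have "d m z \<noteq> 0" using d_zero z V by blast
  then obtain k' where k': "k = Suc k'" using dmz by (cases k) auto
  then obtain z'' where z'': "{m,z''} \<in> E" "d z'' z = k'" using d_step V z dmz by blast
  have "z'' = l" using leaf_adj_unique[OF dm z''(1)] e adj_sym by blast
  then show False using z'' k k' by simp
qed

lemma leaf_exists:
  assumes card2: "card V \<ge> 2"
  shows "\<exists>v\<in>V. degree E v = 1"
proof -
  obtain r where r: "r \<in> V" using card2 by (metis card.empty ex_in_conv not_numeral_le_zero)
  have fin: "finite (d r ` V)" using finV by simp
  have ne: "d r ` V \<noteq> {}" using r by blast
  obtain v where v: "v \<in> V" "d r v = Max (d r ` V)" using Max_in[OF fin ne] by auto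
  have max: "\<And>u. u \<in> V \<Longrightarrow> d r u \<le> d r v" using v fin by simp
  obtain u where u: "u \<in> V" "u \<noteq> r"
  proof -
    have "V \<noteq> {r}" using card2 by auto
    then show ?thesis using that r by blast
  qed
  have "d r u \<noteq> 0" using d_zero u r by blast
  then have "d r v \<noteq> 0" using max[OF u(1)] by simp
  then obtain k where k: "d r v = Suc k" by (cases "d r v") auto
  then have "d v r = Suc k" using d_sym r v by simp
  then obtain w where w: "{v,w} \<in> E" "d w r = k" using d_step v r by blast
  have wV: "w \<in> V" using w adj_V by blast
  have drw: "d r w = k" using w d_sym wV r by simp
  have all: "e = {v,w}" if e: "e \<in> E" "v \<in> e" for e
  proof -
    obtain w' where w': "e = {v,w'}" using edge_other e by blast
    have w'V: "w' \<in> V" using e w' adj_V by blast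
    have "{w',v} \<in> E" using e w' adj_sym by simp
    then have "d r w' = d r v + 1 \<or> d r v = d r w' + 1" using edge_d_cases[of w' v r] r by blast
    then have "d r w' = k" using max[OF w'V] k by auto
    then have "w' = w" using parent_unique[OF r, of v w' w] e w' w drw k by simp
    then show ?thesis using w' by simp
  qed
  have "{e\<in>E. v \<in> e} = {{v,w}}"
  proof (intro equalityI subsetI)
    fix e assume "e \<in> {e\<in>E. v \<in> e}"
    then show "e \<in> {{v,w}}" using all by simp
  next
    fix e assume "e \<in> {{v,w}}"
    then show "e \<in> {e\<in>E. v \<in> e}" using w by simp
  qed
  then have "degree E v = 1" unfolding degree_def by simp
  then show ?thesis using v by blast
qed

lemma leaf_side:
  assumes dl: "degree E l = 1" and e: "{l,m} \<in> E" and u: "u \<in> V" and ul: "u \<noteq> l"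
  shows "d u m < d u l"
proof -
  have V: "l \<in> V" "m \<in> V" using e adj_V by blast+
  have c: "d u l = d u m + 1 \<or> d u m = d u l + 1" using edge_d_cases[OF e u] .
  show ?thesis
  proof (rule ccontr)
    assume "\<not> d u m < d u l"
    then have dm: "d u m = d u l + 1" using c by auto
    have "d u l \<noteq> 0" using d_zero u V ul by blast
    then obtain k where k: "d l u = Suc k" using d_sym u V by (cases "d u l") auto
    then obtain z where z: "{l,z} \<in> E" "d z u = k" using d_step V u by blast
    have "z = m" using leaf_adj_unique[OF dl z(1) e] .
    then show False using z dm k d_sym u V by simp
  qed
qed

end

context tree begin

lemma card_E: "card E = card V - 1"
proof -
  obtain r where r: "r \<in> V" using tree unfolding is_tree_def by blast
  define par where "par v = (SOME w. {v,w} \<in> E \<and> d r w + 1 = d r v)" for v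
  have par: "{v, par v} \<in> E \<and> d r (par v) + 1 = d r v" if v: "v \<in> V" "v \<noteq> r" for v
  proof -
    have "d r v \<noteq> 0" using d_zero r v by metis
    then obtain k where k: "d r v = Suc k" by (cases "d r v") auto
    then have "d v r = Suc k" using d_sym r v by simp
    then obtain w where w: "{v,w} \<in> E" "d w r = k" using d_step v r by blast
    have "d r w = k" using w d_sym r adj_V by metis
    then have "\<exists>w. {v,w} \<in> E \<and> d r w + 1 = d r v" using w k by auto
    then show ?thesis unfolding par_def by (rule someI_ex)
  qed
  define \<phi> where "\<phi> v = {v, par v}" for v
  have img: "\<phi> ` (V - {r}) = E"
  proof (intro equalityI subsetI)
    fix e assume "e \<in> \<phi> ` (V - {r})"
    then show "e \<in> E" using par unfolding \<phi>_def by auto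
  next
    fix e assume e: "e \<in> E"
    have ab: "{eA e, eB e} \<in> E" "{eB e, eA e} \<in> E" using eAB_E[OF e] adj_sym by blast+
    have V: "eA e \<in> V" "eB e \<in> V" using eAB_V e by blast+
    have "e = \<phi> a \<and> a \<in> V \<and> a \<noteq> r" if h: "{a,b} \<in> E" "d r a = d r b + 1" "e = {a,b}" for a b
    proof -
      have aV: "a \<in> V" using h adj_V by blast
      have ar: "a \<noteq> r" using h by auto
      have "par a = b"
        using parent_unique[OF r, of a "par a" b] par[OF aV ar] h by simp
      then show ?thesis unfolding \<phi>_def using h aV ar by simp
    qed
    moreover have "d r (eA e) = d r (eB e) + 1 \<or> d r (eB e) = d r (eA e) + 1"
      using edge_d_cases[OF ab(1) r] .
    moreover have "e = {eA e, eB e}" "e = {eB e, eA e}" using eAB[OF e] by (auto simp: insert_commute)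
    ultimately obtain a where "e = \<phi> a" "a \<in> V" "a \<noteq> r"
      using ab by blast
    then show "e \<in> \<phi> ` (V - {r})" by blast
  qed
  have inj: "inj_on \<phi> (V - {r})"
  proof (rule inj_onI)
    fix v w assume v: "v \<in> V - {r}" and w: "w \<in> V - {r}" and eq: "\<phi> v = \<phi> w"
    show "v = w"
    proof (rule ccontr)
      assume ne: "v \<noteq> w"
      have pv: "d r (par v) + 1 = d r v" "d r (par w) + 1 = d r w" using par v w by auto
      from eq ne have h: "v = par w" "w = par v" unfolding \<phi>_def by (auto simp: doubleton_eq_iff)
      have "d r v + 1 = d r w" using pv(2) by (simp add: h(1)[symmetric])
      moreover have "d r w + 1 = d r v" using pv(1) by (simp add: h(2)[symmetric])
      ultimately show False by simp
    qed
  qed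
  have "card E = card (V - {r})" using card_image[OF inj] img by simp
  then show ?thesis using r finV by simp
qed

definition Pend where "Pend = {e\<in>E. \<exists>v\<in>e. degree E v = 1}"
definition Inn where "Inn = E - Pend"

lemma card_Pend:
  assumes card3: "card V \<ge> 3"
  shows "card Pend = card (pendant_vertices V E)"
proof -
  define lf where "lf l = {l, SOME w. {l,w} \<in> E}" for l
  have lfE: "{l, SOME w. {l,w} \<in> E} \<in> E" if dl: "degree E l = 1" for l
  proof -
    obtain w where "{l,w} \<in> E" using deg1_edge[OF dl] by blast
    then show ?thesis by (rule someI)
  qed
  have "bij_betw lf (pendant_vertices V E) Pend"
  proof (rule bij_betw_imageI)
    show "inj_on lf (pendant_vertices V E)"
    proof (rule inj_onI)
      fix l1 l2 assume l1: "l1 \<in> pendant_vertices V E" and l2: "l2 \<in> pendant_vertices V E" and eq: "lf l1 = lf l2"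
      have d1: "degree E l1 = 1" "degree E l2 = 1" using l1 l2 unfolding pendant_vertices_def by auto
      show "l1 = l2"
      proof (rule ccontr)
        assume ne: "l1 \<noteq> l2"
        have "l2 \<in> lf l1" using eq unfolding lf_def by auto
        then have "l2 = (SOME w. {l1,w} \<in> E)" using ne unfolding lf_def by auto
        then have "{l1,l2} \<in> E" using lfE[OF d1(1)] by simp
        then show False using two_leaves[OF card3 _ d1] by blast
      qed
    qed
  next
    show "lf ` pendant_vertices V E = Pend"
    proof (intro equalityI subsetI)
      fix e assume "e \<in> lf ` pendant_vertices V E"
      then obtain l where l: "l \<in> pendant_vertices V E" "e = lf l" by blast
      then have "degree E l = 1" unfolding pendant_vertices_def by auto
      then show "e \<in> Pend" using lfE l unfolding Pend_def lf_def by auto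
    next
      fix e assume "e \<in> Pend"
      then obtain v where v: "e \<in> E" "v \<in> e" "degree E v = 1" unfolding Pend_def by blast
      then obtain w where w: "e = {v,w}" using edge_other by blast
      have "w = (SOME w. {v,w} \<in> E)" using leaf_adj_unique[OF v(3)] lfE[OF v(3)] v w by blast
      then have "e = lf v" unfolding lf_def using w by simp
      moreover have "v \<in> pendant_vertices V E" using v edge_sub unfolding pendant_vertices_def by blast
      ultimately show "e \<in> lf ` pendant_vertices V E" by blast
    qed
  qed
  then show ?thesis by (simp add: bij_betw_same_card)
qed

lemma card_Inn:
  assumes card3: "card V \<ge> 3"
  shows "card Inn = card V - 1 - card (pendant_vertices V E)"
proof -
  have "Pend \<subseteq> E" unfolding Pend_def by auto
  then have "card Inn = card E - card Pend" unfolding Inn_def using finE by (simp add: card_Diff_subset finite_subset)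
  then show ?thesis using card_E card_Pend[OF card3] by simp
qed

lemma Pend_le: "card Pend \<le> card E"
  using finE unfolding Pend_def by (simp add: card_mono)

end

definition ind :: "bool \<Rightarrow> real" where "ind b = (if b then 1 else 0)"

lemma pe_real: "real (pe a b c e) = 1 + (1 - (ind a + ind b - 1)^2) * (1 - (ind c + ind e - 1)^2)
   - (ind a + ind b - 1) * (ind c + ind e - 1)"
  unfolding pe_def sep_def ind_def by (cases a; cases b; cases c; cases e) (simp_all add: power2_eq_square)

context tree begin

definition tt where "tt e P = (\<Sum>u\<in>P. ind (side e u))"
definition CC where "CC e P = tt e P - 1"
definition RR where "RR e P = 1 - (CC e P)^2"

lemma tt_pair: "u \<noteq> v \<Longrightarrow> tt e {u,v} = ind (side e u) + ind (side e v)"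
  unfolding tt_def by simp

lemma pair_repr: assumes "P \<in> pairs V"
  shows "P = {fst (SOME p. P = {fst p, snd p}), snd (SOME p. P = {fst p, snd p})}"
        "fst (SOME p. P = {fst p, snd p}) \<noteq> snd (SOME p. P = {fst p, snd p})"
        "fst (SOME p. P = {fst p, snd p}) \<in> V" "snd (SOME p. P = {fst p, snd p}) \<in> V"
proof -
  have c: "card P = 2" "P \<subseteq> V" using assms unfolding pairs_def by auto
  then obtain a b where "a \<noteq> b" "P = {a,b}" using card_2_iff by metis
  then have ex: "\<exists>p. P = {fst p, snd p}" by (intro exI[of _ "(a,b)"]) simp
  show eq: "P = {fst (SOME p. P = {fst p, snd p}), snd (SOME p. P = {fst p, snd p})}"
    using someI_ex[OF ex] .
  show "fst (SOME p. P = {fst p, snd p}) \<noteq> snd (SOME p. P = {fst p, snd p})"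
  proof
    assume h: "fst (SOME p. P = {fst p, snd p}) = snd (SOME p. P = {fst p, snd p})"
    have "card P = 1" by (subst eq) (simp add: h)
    then show False using c by simp
  qed
  show "fst (SOME p. P = {fst p, snd p}) \<in> V" "snd (SOME p. P = {fst p, snd p}) \<in> V"
    using c(2) eq by blast+
qed

lemma entry_formula:
  assumes P: "P \<in> pairs V" and Q: "Q \<in> pairs V"
  shows "real (max4pc_entry E P Q) = (\<Sum>e\<in>E. 1 + RR e P * RR e Q - CC e P * CC e Q)"
proof -
  define w where "w = fst (SOME p. P = {fst p, snd p})"
  define x where "x = snd (SOME p. P = {fst p, snd p})"
  define y where "y = fst (SOME p. Q = {fst p, snd p})"
  define z where "z = snd (SOME p. Q = {fst p, snd p})"
  have Pw: "P = {w,x}" "w \<noteq> x" "w \<in> V" "x \<in> V" using pair_repr[OF P] unfolding w_def x_def by auto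
  have Qy: "Q = {y,z}" "y \<noteq> z" "y \<in> V" "z \<in> V" using pair_repr[OF Q] unfolding y_def z_def by auto
  have "max4pc_entry E P Q = max (d w x + d y z) (max (d w y + d x z) (d w z + d x y))"
    unfolding max4pc_entry_def Let_def w_def x_def y_def z_def by (simp add: case_prod_unfold)
  also have "\<dots> = (\<Sum>e\<in>E. pe (side e w) (side e x) (side e y) (side e z))"
    using four_point Pw Qy by blast
  finally have "real (max4pc_entry E P Q) = (\<Sum>e\<in>E. real (pe (side e w) (side e x) (side e y) (side e z)))"
    by simp
  also have "\<dots> = (\<Sum>e\<in>E. 1 + RR e P * RR e Q - CC e P * CC e Q)"
    by (intro sum.cong refl) (simp add: pe_real RR_def CC_def tt_pair Pw Qy)
  finally show ?thesis .
qed

end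

lemma ind_cases: "ind b = 0 \<or> ind b = 1" unfolding ind_def by simp
lemma ind_not: "ind (\<not> b) = 1 - ind b" unfolding ind_def by simp

context tree begin

lemma pair_obtain: assumes "P \<in> pairs V" obtains w x where "P = {w,x}" "w \<noteq> x" "w \<in> V" "x \<in> V"
  using pair_repr[OF assms] by blast

lemma pend_side:
  assumes dl: "degree E v = 1" and e: "{v,m} \<in> E" and u: "u \<in> V" "u \<noteq> v"
  shows "side {v,m} u = side {v,m} m"
proof -
  have V: "v \<in> V" "m \<in> V" using e adj_V by blast+
  have vm: "v \<noteq> m" using adj_neq e by blast
  have l1: "d u m < d u v" using leaf_side[OF dl e u] .
  have l2: "d m m < d m v" using d_adj[OF adj_sym[OF e]] by simp
  have "(eA {v,m} = v \<and> eB {v,m} = m) \<or> (eA {v,m} = m \<and> eB {v,m} = v)"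
    using eAB[OF e] vm by (auto simp: doubleton_eq_iff)
  then show ?thesis unfolding side_def using l1 l2 by auto
qed

lemma pend_vals:
  assumes dl: "degree E v = 1" and e: "{v,m} \<in> E" and P: "P \<in> pairs V"
  shows "RR {v,m} P = (if v \<in> P then 1 else 0)"
    and "CC {v,m} P = (if v \<in> P then 0 else 2 * ind (side {v,m} m) - 1)"
proof -
  obtain w x where wx: "P = {w,x}" "w \<noteq> x" "w \<in> V" "x \<in> V" using pair_obtain[OF P] by blast
  have sv: "side {v,m} v = (\<not> side {v,m} m)"
  proof -
    have vm: "v \<noteq> m" using adj_neq e by blast
    have "side {v,m} v \<longleftrightarrow> v = eB {v,m}" "side {v,m} m \<longleftrightarrow> m = eB {v,m}"
      using side_endpoint[OF e] by auto
    moreover have "eB {v,m} = v \<or> eB {v,m} = m" using eAB[OF e] by (auto simp: doubleton_eq_iff)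
    ultimately show ?thesis using vm by auto
  qed
  have ps: "\<And>u. u \<in> V \<Longrightarrow> u \<noteq> v \<Longrightarrow> side {v,m} u = side {v,m} m" using pend_side[OF dl e] by blast
  have i: "ind (side {v,m} m) = 0 \<or> ind (side {v,m} m) = 1" by (rule ind_cases)
  have tt: "tt {v,m} P = (if v \<in> P then 1 else 2 * ind (side {v,m} m))"
  proof (cases "w = v")
    case True
    then show ?thesis using wx tt_pair ps sv by (simp add: ind_not)
  next
    case False
    show ?thesis
    proof (cases "x = v")
      case True
      then show ?thesis using wx tt_pair ps sv False by (simp add: ind_not)
    next
      case False2: False
      then show ?thesis using wx tt_pair ps False by simp
    qed
  qed
  show "CC {v,m} P = (if v \<in> P then 0 else 2 * ind (side {v,m} m) - 1)"
    unfolding CC_def tt by simp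
  show "RR {v,m} P = (if v \<in> P then 1 else 0)"
    unfolding RR_def CC_def tt using i by (auto simp: power2_eq_square)
qed

lemma pend_term:
  assumes e: "e \<in> Pend" and P: "P \<in> pairs V" and Q: "Q \<in> pairs V"
  shows "1 + RR e P * RR e Q - CC e P * CC e Q = RR e P + RR e Q"
proof -
  obtain v where v: "e \<in> E" "v \<in> e" "degree E v = 1" using e unfolding Pend_def by blast
  obtain m where m: "e = {v,m}" using edge_other v by blast
  have eE: "{v,m} \<in> E" using v m by simp
  have i: "ind (side {v,m} m) = 0 \<or> ind (side {v,m} m) = 1" by (rule ind_cases)
  show ?thesis unfolding m using pend_vals[OF v(3) eE P] pend_vals[OF v(3) eE Q] i
    by (auto simp: algebra_simps)
qed

lemma same_side_vals:
  assumes ab: "side e a = side e b" and xa: "x \<noteq> a" and xb: "x \<noteq> b"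
  shows "RR e {a,x} = RR e {b,x}" "CC e {a,x} = CC e {b,x}"
  using tt_pair[OF xa[symmetric]] tt_pair[OF xb[symmetric]] ab unfolding RR_def CC_def by simp_all

lemma int_vals:
  assumes e: "e = {a,b}" "e \<in> E" and ax: "{a,x} \<in> E" and xb: "x \<noteq> b"
  shows "RR e {a,x} = 0" "RR e {b,x} = 1" "CC e {a,x} = 2 * ind (side e a) - 1" "CC e {b,x} = 0"
proof -
  have aV: "a \<in> V" using e edge_sub by blast
  have ab: "a \<noteq> b" using e adj_neq by blast
  have xa: "x \<noteq> a" using adj_neq ax by blast
  have ne: "e \<noteq> {a,x}" using e xb ab by (auto simp: doubleton_eq_iff)
  have sx: "side e x = side e a" using side_eq[OF e(2) aV ax ne] by simp
  have sb: "side e b = (\<not> side e a)"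
  proof -
    have "side e a \<longleftrightarrow> a = eB e" "side e b \<longleftrightarrow> b = eB e" using side_endpoint[OF e(2)] e by auto
    moreover have "eB e = a \<or> eB e = b" using eAB[OF e(2)] e by (auto simp: doubleton_eq_iff)
    ultimately show ?thesis using ab by auto
  qed
  have i: "ind (side e a) = 0 \<or> ind (side e a) = 1" by (rule ind_cases)
  have t1: "tt e {a,x} = 2 * ind (side e a)" using tt_pair[OF xa[symmetric]] sx by (simp add: insert_commute)
  have t2: "tt e {b,x} = 1" using tt_pair[OF xb[symmetric]] sx sb by (simp add: insert_commute ind_not)
  show "RR e {a,x} = 0" unfolding RR_def CC_def t1 using i by (auto simp: power2_eq_square)
  show "RR e {b,x} = 1" unfolding RR_def CC_def t2 by simp
  show "CC e {a,x} = 2 * ind (side e a) - 1" unfolding CC_def t1 by simp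
  show "CC e {b,x} = 0" unfolding CC_def t2 by simp
qed

end

locale tree3 = tree +
  assumes card3: "card V \<ge> 3"
begin

definition u0 where "u0 P = (\<Sum>e\<in>Pend. RR e P)"

definition Idx :: "(nat \<times> 'a set) set" where
  "Idx = {(0, {}), (1, {})} \<union> Pair 2 ` Inn \<union> Pair 3 ` Inn"

definition phi :: "nat \<times> 'a set \<Rightarrow> 'a set \<Rightarrow> real" where
  "phi i P = (if fst i = 0 then 1 else if fst i = 1 then u0 P else if fst i = 2 then RR (snd i) P else CC (snd i) P)"

abbreviation "mm P Q \<equiv> real (max4pc_entry E P Q)"

lemma finInn: "finite Inn" unfolding Inn_def using finE by simp
lemma finPend: "finite Pend" unfolding Pend_def using finE by simp
lemma InnE: "e \<in> Inn \<Longrightarrow> e \<in> E" unfolding Inn_def by simp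

lemma finIdx: "finite Idx" unfolding Idx_def using finInn by simp

lemma sum_Idx: "(\<Sum>i\<in>Idx. g i) = g (0,{}) + g (1,{}) + (\<Sum>e\<in>Inn. g (2,e)) + (\<Sum>e\<in>Inn. g (3,e))"
proof -
  have d1: "({(0::nat, {}), (1, {})} \<union> Pair 2 ` Inn) \<inter> Pair 3 ` Inn = {}" by auto
  have d2: "{(0::nat, {}), (1, {})} \<inter> Pair 2 ` Inn = {}" by auto
  have "(\<Sum>i\<in>Idx. g i) = (\<Sum>i\<in>{(0, {}), (1, {})} \<union> Pair 2 ` Inn. g i) + (\<Sum>i\<in>Pair 3 ` Inn. g i)"
    unfolding Idx_def using finInn d1 by (intro sum.union_disjoint) auto
  also have "(\<Sum>i\<in>{(0, {}), (1, {})} \<union> Pair 2 ` Inn. g i) = (\<Sum>i\<in>{(0::nat, {}), (1, {})}. g i) + (\<Sum>i\<in>Pair 2 ` Inn. g i)"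
    using finInn d2 by (intro sum.union_disjoint) auto
  also have "(\<Sum>i\<in>Pair 2 ` Inn. g i) = (\<Sum>e\<in>Inn. g (2,e))"
    by (subst sum.reindex) (auto simp: inj_on_def)
  also have "(\<Sum>i\<in>Pair 3 ` Inn. g i) = (\<Sum>e\<in>Inn. g (3,e))"
    by (subst sum.reindex) (auto simp: inj_on_def)
  finally show ?thesis by simp
qed

lemma card_Idx: "card Idx = 2 + 2 * card Inn"
proof -
  have "card Idx = (\<Sum>i\<in>Idx. 1)" by simp
  also have "\<dots> = 2 + 2 * card Inn" unfolding sum_Idx by simp
  finally show ?thesis .
qed

lemma E_split: "Pend \<union> Inn = E" "Pend \<inter> Inn = {}"
  unfolding Inn_def Pend_def by auto

lemma m_decomp:
  assumes P: "P \<in> pairs V" and Q: "Q \<in> pairs V"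
  shows "mm P Q = (\<Sum>i\<in>Idx. (if fst i = 0 then u0 Q + card Inn else if fst i = 1 then 1
                    else if fst i = 2 then RR (snd i) Q else - CC (snd i) Q) * phi i P)"
proof -
  have "mm P Q = (\<Sum>e\<in>E. 1 + RR e P * RR e Q - CC e P * CC e Q)" by (rule entry_formula[OF P Q])
  also have "\<dots> = (\<Sum>e\<in>Pend. 1 + RR e P * RR e Q - CC e P * CC e Q) + (\<Sum>e\<in>Inn. 1 + RR e P * RR e Q - CC e P * CC e Q)"
    using sum.union_disjoint[OF finPend finInn E_split(2)] unfolding E_split(1) .
  also have "(\<Sum>e\<in>Pend. 1 + RR e P * RR e Q - CC e P * CC e Q) = u0 P + u0 Q"
    unfolding u0_def using pend_term[OF _ P Q] by (simp add: sum.distrib)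
  also have "(\<Sum>e\<in>Inn. 1 + RR e P * RR e Q - CC e P * CC e Q) = card Inn + (\<Sum>e\<in>Inn. RR e Q * RR e P) + (\<Sum>e\<in>Inn. - CC e Q * CC e P)"
    by (simp add: sum.distrib sum_subtractf sum_negf algebra_simps)
  finally show ?thesis unfolding sum_Idx phi_def by simp
qed

lemma other_edge:
  assumes e: "e \<in> E" and a: "a \<in> e" and da: "degree E a \<noteq> 1"
  obtains x where "{a,x} \<in> E" "{a,x} \<noteq> e"
proof -
  have fin: "finite {e'\<in>E. a \<in> e'}" using finE by simp
  have ein: "e \<in> {e'\<in>E. a \<in> e'}" using e a by simp
  have "\<exists>e'\<in>{e'\<in>E. a \<in> e'}. e' \<noteq> e"
  proof (rule ccontr)
    assume "\<not> ?thesis"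
    then have "{e'\<in>E. a \<in> e'} = {e}" using ein by blast
    then show False using da unfolding degree_def by simp
  qed
  then obtain e' where e': "e' \<in> E" "a \<in> e'" "e' \<noteq> e" by blast
  then obtain x where "e' = {a,x}" using edge_other by blast
  then show ?thesis using that e' by blast
qed

lemma mm_diff:
  assumes P: "P \<in> pairs V" and f: "f \<in> pairs V" and g: "g \<in> pairs V"
  shows "mm P f - mm P g = (\<Sum>e\<in>E. RR e P * (RR e f - RR e g) - CC e P * (CC e f - CC e g))"
  using entry_formula[OF P f] entry_formula[OF P g] by (simp add: sum_subtractf[symmetric] algebra_simps)

end

lemma sum_single: "finite A \<Longrightarrow> a \<in> A \<Longrightarrow> (\<And>x. x \<in> A \<Longrightarrow> x \<noteq> a \<Longrightarrow> h x = 0) \<Longrightarrow> sum h A = (h a :: real)"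
  by (simp add: sum.remove)

context tree3 begin

lemma pairs_I: "u \<in> V \<Longrightarrow> v \<in> V \<Longrightarrow> u \<noteq> v \<Longrightarrow> {u,v} \<in> pairs V"
  unfolding pairs_def by auto

lemma Inn_not_Pend: "e \<in> Inn \<Longrightarrow> v \<in> e \<Longrightarrow> degree E v \<noteq> 1"
  unfolding Inn_def Pend_def by auto

lemma int_witness:
  assumes e: "e \<in> Inn"
  obtains a b x1 x2 where "e = {a,b}" "{a,x1} \<in> E" "x1 \<noteq> b" "{b,x2} \<in> E" "x2 \<noteq> a"
proof -
  have eE: "e \<in> E" using e InnE by blast
  define a where "a = eA e"
  define b where "b = eB e"
  have ab: "e = {a,b}" "a \<noteq> b" using eAB[OF eE] unfolding a_def b_def by auto
  obtain x1 where x1: "{a,x1} \<in> E" "{a,x1} \<noteq> e"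
    using other_edge[OF eE _ Inn_not_Pend[OF e]] ab by blast
  obtain x2 where x2: "{b,x2} \<in> E" "{b,x2} \<noteq> e"
    using other_edge[OF eE _ Inn_not_Pend[OF e]] ab by blast
  have "x1 \<noteq> b" using x1 ab by auto
  moreover have "x2 \<noteq> a" using x2 ab by (auto simp: insert_commute)
  ultimately show ?thesis using that ab x1 x2 by blast
qed

lemma int_diff:
  assumes e: "e \<in> Inn" and eab: "e = {a,b}" and ax: "{a,x} \<in> E" and xb: "x \<noteq> b"
  shows "{a,x} \<in> pairs V" "{b,x} \<in> pairs V"
    and "\<And>P. P \<in> pairs V \<Longrightarrow> mm P {a,x} - mm P {b,x} = - RR e P - (2 * ind (side e a) - 1) * CC e P"
    and "\<And>lam. (\<Sum>i\<in>Idx. lam i * (phi i {a,x} - phi i {b,x})) = - lam (2,e) + (2 * ind (side e a) - 1) * lam (3,e)"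
proof -
  have eE: "e \<in> E" using e InnE by blast
  have V: "a \<in> V" "b \<in> V" "x \<in> V" using eE eab ax edge_sub by auto
  have xa: "x \<noteq> a" using adj_neq ax by blast
  have ab: "a \<noteq> b" using adj_neq eE eab by blast
  show f1: "{a,x} \<in> pairs V" using pairs_I V xa by blast
  show f2: "{b,x} \<in> pairs V" using pairs_I V xb by blast
  have iv: "RR e {a,x} = 0" "RR e {b,x} = 1" "CC e {a,x} = 2 * ind (side e a) - 1" "CC e {b,x} = 0"
    using int_vals[OF eab eE ax xb] by auto
  have other: "RR e' {a,x} = RR e' {b,x} \<and> CC e' {a,x} = CC e' {b,x}" if e': "e' \<in> E" "e' \<noteq> e" for e'
  proof -
    have "side e' a = side e' b" using side_eq[OF e'(1) V(1), of b] eE eab e' by simp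
    then show ?thesis using same_side_vals xa xb by blast
  qed
  show "mm P {a,x} - mm P {b,x} = - RR e P - (2 * ind (side e a) - 1) * CC e P" if P: "P \<in> pairs V" for P
  proof -
    have "mm P {a,x} - mm P {b,x} = (\<Sum>e'\<in>E. RR e' P * (RR e' {a,x} - RR e' {b,x}) - CC e' P * (CC e' {a,x} - CC e' {b,x}))"
      by (rule mm_diff[OF P f1 f2])
    also have "\<dots> = RR e P * (RR e {a,x} - RR e {b,x}) - CC e P * (CC e {a,x} - CC e {b,x})"
      by (rule sum_single[OF finE eE]) (simp add: other)
    finally show ?thesis using iv by simp
  qed
  show "(\<Sum>i\<in>Idx. lam i * (phi i {a,x} - phi i {b,x})) = - lam (2,e) + (2 * ind (side e a) - 1) * lam (3,e)" for lam
  proof -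
    have u: "u0 {a,x} - u0 {b,x} = 0"
    proof -
      have "u0 {a,x} - u0 {b,x} = (\<Sum>e'\<in>Pend. RR e' {a,x} - RR e' {b,x})" unfolding u0_def by (simp add: sum_subtractf)
      also have "\<dots> = 0" using other e unfolding Pend_def Inn_def by (intro sum.neutral) auto
      finally show ?thesis .
    qed
    have s2: "(\<Sum>e'\<in>Inn. lam (2,e') * (RR e' {a,x} - RR e' {b,x})) = lam (2,e) * (RR e {a,x} - RR e {b,x})"
      by (rule sum_single[OF finInn e]) (simp add: other InnE)
    have s3: "(\<Sum>e'\<in>Inn. lam (3,e') * (CC e' {a,x} - CC e' {b,x})) = lam (3,e) * (CC e {a,x} - CC e {b,x})"
      by (rule sum_single[OF finInn e]) (simp add: other InnE)
    show ?thesis unfolding sum_Idx phi_def using u s2 s3 iv by (simp add: algebra_simps)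
  qed
qed

lemma RR_pend:
  assumes e: "e \<in> Pend" and P: "P \<in> pairs V"
  shows "RR e P = (if \<exists>v\<in>P. v \<in> e \<and> degree E v = 1 then 1 else 0)"
proof -
  obtain v where v: "e \<in> E" "v \<in> e" "degree E v = 1" using e unfolding Pend_def by blast
  obtain m where m: "e = {v,m}" using edge_other v by blast
  have eE: "{v,m} \<in> E" using v m by simp
  have dm: "degree E m \<noteq> 1" using two_leaves[OF card3 eE v(3)] by blast
  have "(\<exists>v'\<in>P. v' \<in> e \<and> degree E v' = 1) \<longleftrightarrow> v \<in> P" using m v dm by auto
  then show ?thesis using pend_vals(1)[OF v(3) eE P] m by simp
qed

lemma leaf_count:
  assumes l: "degree E l = 1"
  shows "(\<Sum>e\<in>Pend. if l \<in> e then 1 else 0) = (1::real)"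
proof -
  obtain m where m: "{l,m} \<in> E" "\<And>e. e \<in> E \<Longrightarrow> l \<in> e \<Longrightarrow> e = {l,m}" using deg1_edge[OF l] by blast
  have "{l,m} \<in> Pend" using m(1) l unfolding Pend_def by blast
  then have "(\<Sum>e\<in>Pend. if l \<in> e then 1 else 0) = (if l \<in> {l,m} then 1 else 0 :: real)"
  proof (rule sum_single[OF finPend])
    fix e assume e: "e \<in> Pend" "e \<noteq> {l,m}"
    have "l \<notin> e"
    proof
      assume "l \<in> e"
      moreover have "e \<in> E" using e unfolding Pend_def by blast
      ultimately show False using m(2) e(2) by blast
    qed
    then show "(if l \<in> e then 1 else 0) = (0::real)" by simp
  qed
  then show ?thesis by simp
qed

lemma u0_distinct: "\<exists>fa fb. fa \<in> pairs V \<and> fb \<in> pairs V \<and> u0 fa \<noteq> u0 fb"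
proof -
  obtain l where l: "l \<in> V" "degree E l = 1" using leaf_exists card3 by fastforce
  obtain m where m: "{l,m} \<in> E" "\<And>e. e \<in> E \<Longrightarrow> l \<in> e \<Longrightarrow> e = {l,m}" using deg1_edge[OF l(2)] by blast
  have mV: "m \<in> V" using m adj_V by blast
  have lm: "l \<noteq> m" using m adj_neq by blast
  have dm: "degree E m \<noteq> 1" using two_leaves[OF card3 m(1) l(2)] by blast
  have fa: "{l,m} \<in> pairs V" using pairs_I l mV lm by blast
  have ua: "u0 {l,m} = 1"
  proof -
    have "u0 {l,m} = (\<Sum>e\<in>Pend. if l \<in> e then 1 else 0)"
      unfolding u0_def using RR_pend[OF _ fa] dm l(2) by (intro sum.cong refl) auto
    then show ?thesis using leaf_count[OF l(2)] by simp
  qed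
  show ?thesis
  proof (cases "\<exists>m2\<in>V. m2 \<noteq> m \<and> degree E m2 \<noteq> 1")
    case True
    then obtain m2 where m2: "m2 \<in> V" "m2 \<noteq> m" "degree E m2 \<noteq> 1" by blast
    have fb: "{m,m2} \<in> pairs V" using pairs_I m2 mV by blast
    have "u0 {m,m2} = 0" unfolding u0_def using RR_pend[OF _ fb] dm m2 by (intro sum.neutral) auto
    then show ?thesis using fa fb ua by (intro exI[of _ "{l,m}"] exI[of _ "{m,m2}"]) simp
  next
    case False
    have "\<not> V \<subseteq> {l,m}"
    proof
      assume "V \<subseteq> {l,m}"
      then have "card V \<le> card {l,m}" by (rule card_mono[rotated]) simp
      then show False using card3 lm by simp
    qed
    then obtain l2 where l2: "l2 \<in> V" "l2 \<noteq> l" "l2 \<noteq> m" by blast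
    have dl2: "degree E l2 = 1" using False l2 by blast
    have fb: "{l,l2} \<in> pairs V" using pairs_I l l2 by metis
    have "u0 {l,l2} = (\<Sum>e\<in>Pend. (if l \<in> e then 1 else 0) + (if l2 \<in> e then 1 else 0))"
      unfolding u0_def
    proof (intro sum.cong refl)
      fix e assume e: "e \<in> Pend"
      have "\<not> (l \<in> e \<and> l2 \<in> e)"
      proof
        assume h: "l \<in> e \<and> l2 \<in> e"
        have "e = {l,m}" using m(2) e h unfolding Pend_def by blast
        then show False using h l2 by simp
      qed
      then show "RR e {l,l2} = (if l \<in> e then 1 else 0) + (if l2 \<in> e then 1 else 0)"
        using RR_pend[OF e fb] l(2) dl2 by auto
    qed
    also have "\<dots> = 2" using leaf_count[OF l(2)] leaf_count[OF dl2] by (simp add: sum.distrib)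
    finally show ?thesis using fa fb ua by (intro exI[of _ "{l,m}"] exI[of _ "{l,l2}"]) simp
  qed
qed

end

context vec_space begin

lemma span_zero_mem: assumes S: "S \<subseteq> carrier_vec n" shows "0\<^sub>v n \<in> span S"
proof -
  have sub: "LinearCombinations.submodule class_ring (span S) V" using span_is_submodule[OF S] .
  show ?thesis using LinearCombinations.submodule.zero_closed[OF sub] by simp
qed

lemma lc_in_span:
  assumes S: "S \<subseteq> carrier_vec n" and K: "finite K" and v: "\<And>i. i \<in> K \<Longrightarrow> v i \<in> span S"
  shows "vec n (\<lambda>r. \<Sum>i\<in>K. c i * v i $ r) \<in> span S"
  using K v
proof (induction K)
  case empty
  have "vec n (\<lambda>r. \<Sum>i\<in>{}. c i * v i $ r) = 0\<^sub>v n" by (auto simp: zero_vec_def)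
  then show ?case using span_zero_mem[OF S] by simp
next
  case (insert j K)
  have sub: "LinearCombinations.submodule class_ring (span S) V" using span_is_submodule[OF S] .
  have vj: "v j \<in> span S" using insert by simp
  have vjc: "v j \<in> carrier_vec n" using span_is_subset2[OF S] vj by auto
  have rest: "vec n (\<lambda>r. \<Sum>i\<in>K. c i * v i $ r) \<in> span S" using insert by simp
  have eq: "vec n (\<lambda>r. \<Sum>i\<in>insert j K. c i * v i $ r) = c j \<cdot>\<^sub>v v j + vec n (\<lambda>r. \<Sum>i\<in>K. c i * v i $ r)"
    using vjc insert(1,2) by (intro eq_vecI) auto
  have "c j \<cdot>\<^sub>v v j \<in> span S" using LinearCombinations.submodule.smult_closed[OF sub] vj by simp
  then have "c j \<cdot>\<^sub>v v j + vec n (\<lambda>r. \<Sum>i\<in>K. c i * v i $ r) \<in> span S"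
    using LinearCombinations.submodule.m_closed[OF sub] rest by simp
  then show ?case using eq by simp
qed

lemma span_eq_mutual:
  assumes A: "A \<subseteq> carrier_vec n" and B: "B \<subseteq> carrier_vec n" and AB: "A \<subseteq> span B" and BA: "B \<subseteq> span A"
  shows "span A = span B"
proof
  show "span A \<subseteq> span B" using span_is_subset[OF AB span_is_submodule[OF B]] .
  show "span B \<subseteq> span A" using span_is_subset[OF BA span_is_submodule[OF A]] .
qed

lemma family_indep:
  assumes K: "finite K" and vc: "\<And>i. i \<in> K \<Longrightarrow> v i \<in> carrier_vec n"
    and ind: "\<And>lam. vec n (\<lambda>r. \<Sum>i\<in>K. lam i * v i $ r) = 0\<^sub>v n \<Longrightarrow> \<forall>i\<in>K. lam i = 0"
  shows "inj_on v K" "lin_indpt (v ` K)"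
proof -
  show inj: "inj_on v K"
  proof (rule inj_onI)
    fix i j assume i: "i \<in> K" and j: "j \<in> K" and eq: "v i = v j"
    show "i = j"
    proof (rule ccontr)
      assume ne: "i \<noteq> j"
      define lam :: "_ \<Rightarrow> 'a" where "lam k = (if k = i then 1 else if k = j then -1 else 0)" for k
      have "vec n (\<lambda>r. \<Sum>k\<in>K. lam k * v k $ r) = 0\<^sub>v n"
      proof (intro eq_vecI)
        fix r assume r: "r < dim_vec (0\<^sub>v n :: 'a vec)"
        have "(\<Sum>k\<in>K. lam k * v k $ r) = (\<Sum>k\<in>K. (if k = i then v k $ r else 0) + (if k = j then - v k $ r else 0))"
          unfolding lam_def using ne by (intro sum.cong refl) auto
        also have "\<dots> = v i $ r - v j $ r" using K i j by (simp add: sum.distrib)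
        finally show "vec n (\<lambda>r. \<Sum>k\<in>K. lam k * v k $ r) $ r = 0\<^sub>v n $ r" using r eq by simp
      qed simp
      then have "lam i = 0" using ind i by blast
      then show False unfolding lam_def by simp
    qed
  qed
  show "lin_indpt (v ` K)"
  proof (rule finite_lin_indpt2)
    show "finite (v ` K)" using K by simp
    show "v ` K \<subseteq> carrier_vec n" using vc by auto
    fix a assume a0: "lincomb a (v ` K) = 0\<^sub>v n"
    have "vec n (\<lambda>r. \<Sum>i\<in>K. a (v i) * v i $ r) = lincomb a (v ` K)"
    proof (intro eq_vecI)
      fix r assume r: "r < dim_vec (lincomb a (v ` K))"
      have vK: "v ` K \<subseteq> carrier_vec n" using vc by auto
      have rn: "r < n" using r lincomb_dim[OF _ vK] K by (metis finite_imageI)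
      have "lincomb a (v ` K) $ r = (\<Sum>x\<in>v ` K. a x * x $ r)" using lincomb_index[OF rn vK] .
      also have "\<dots> = (\<Sum>i\<in>K. a (v i) * v i $ r)" using sum.reindex[OF inj] by simp
      finally show "vec n (\<lambda>r. \<Sum>i\<in>K. a (v i) * v i $ r) $ r = lincomb a (v ` K) $ r" using rn by simp
    next
      have vK: "v ` K \<subseteq> carrier_vec n" using vc by auto
      show "dim_vec (vec n (\<lambda>r. \<Sum>i\<in>K. a (v i) * v i $ r)) = dim_vec (lincomb a (v ` K))"
        using lincomb_dim[OF _ vK] K by simp
    qed
    then have "\<forall>i\<in>K. a (v i) = 0" using ind a0 by simp
    then show "\<forall>w\<in>v ` K. a w = 0" by blast
  qed
qed

lemma dim_indep:
  assumes W: "W \<subseteq> carrier_vec n" "finite W" and li: "lin_indpt W"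
  shows "vectorspace.dim class_ring (span_vs W) = card W"
proof -
  have "maximal W (\<lambda>T. T \<subseteq> W \<and> lin_indpt T)" using li unfolding maximal_def by auto
  then show ?thesis using dim_span[OF W] by blast
qed

lemma rank_via_family:
  assumes A: "A \<in> carrier_mat n nc" and K: "finite K" and vc: "\<And>i. i \<in> K \<Longrightarrow> v i \<in> carrier_vec n"
    and cols_in: "\<And>j. j < nc \<Longrightarrow> col A j \<in> span (v ` K)"
    and v_in: "\<And>i. i \<in> K \<Longrightarrow> v i \<in> span (set (cols A))"
    and ind: "\<And>lam. vec n (\<lambda>r. \<Sum>i\<in>K. lam i * v i $ r) = 0\<^sub>v n \<Longrightarrow> \<forall>i\<in>K. lam i = 0"
  shows "rank A = card K"
proof -
  have inj: "inj_on v K" and li: "lin_indpt (v ` K)" using family_indep[OF K vc ind] by auto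
  have c1: "set (cols A) \<subseteq> carrier_vec n" using A cols_dim by blast
  have c2: "v ` K \<subseteq> carrier_vec n" using vc by auto
  have s1: "set (cols A) \<subseteq> span (v ` K)"
  proof
    fix w assume "w \<in> set (cols A)"
    then obtain j where "j < nc" "w = col A j" using A unfolding cols_def by auto
    then show "w \<in> span (v ` K)" using cols_in by simp
  qed
  have s2: "v ` K \<subseteq> span (set (cols A))" using v_in by auto
  have eq: "span (set (cols A)) = span (v ` K)" using span_eq_mutual[OF c1 c2 s1 s2] .
  have "rank A = vectorspace.dim class_ring (span_vs (set (cols A)))" unfolding rank_def ..
  also have "\<dots> = vectorspace.dim class_ring (span_vs (v ` K))" using eq by simp
  also have "\<dots> = card (v ` K)" using dim_indep[OF c2 _ li] K by simp
  also have "\<dots> = card K" using card_image[OF inj] .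
  finally show ?thesis .
qed

end

context tree3 begin

lemma side_other: assumes e: "e = {a,b}" "e \<in> E" shows "side e b = (\<not> side e a)"
proof -
  have ab: "a \<noteq> b" using e adj_neq by blast
  have "side e a \<longleftrightarrow> a = eB e" "side e b \<longleftrightarrow> b = eB e" using side_endpoint[OF e(2)] e by auto
  moreover have "eB e = a \<or> eB e = b" using eAB[OF e(2)] e by (auto simp: doubleton_eq_iff)
  ultimately show ?thesis using ab by auto
qed

lemma int_data:
  assumes e: "e \<in> Inn"
  obtains f1 f2 f3 f4 c where "f1 \<in> pairs V" "f2 \<in> pairs V" "f3 \<in> pairs V" "f4 \<in> pairs V" "c * c = 1"
    "\<And>P. P \<in> pairs V \<Longrightarrow> mm P f1 - mm P f2 = - RR e P - c * CC e P"
    "\<And>P. P \<in> pairs V \<Longrightarrow> mm P f3 - mm P f4 = - RR e P + c * CC e P"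
    "\<And>lam. (\<Sum>i\<in>Idx. lam i * (phi i f1 - phi i f2)) = - lam (2,e) + c * lam (3,e)"
    "\<And>lam. (\<Sum>i\<in>Idx. lam i * (phi i f3 - phi i f4)) = - lam (2,e) - c * lam (3,e)"
proof -
  obtain a b x1 x2 where w: "e = {a,b}" "{a,x1} \<in> E" "x1 \<noteq> b" "{b,x2} \<in> E" "x2 \<noteq> a"
    using int_witness[OF e] by blast
  have w': "e = {b,a}" using w by (simp add: insert_commute)
  have eE: "e \<in> E" using e InnE by blast
  have sb: "ind (side e b) = 1 - ind (side e a)" using side_other[OF w(1) eE] by (simp add: ind_not)
  have i: "ind (side e a) = 0 \<or> ind (side e a) = 1" by (rule ind_cases)
  note d1 = int_diff[OF e w(1) w(2) w(3)]
  note d2 = int_diff[OF e w' w(4) w(5)]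
  show ?thesis
  proof (rule that[of "{a,x1}" "{b,x1}" "{b,x2}" "{a,x2}" "2 * ind (side e a) - 1"])
    show "{a,x1} \<in> pairs V" "{b,x1} \<in> pairs V" "{b,x2} \<in> pairs V" "{a,x2} \<in> pairs V"
      using d1(1,2) d2(1,2) by auto
    show "(2 * ind (side e a) - 1) * (2 * ind (side e a) - 1) = 1" using i by auto
    show "mm P {a,x1} - mm P {b,x1} = - RR e P - (2 * ind (side e a) - 1) * CC e P" if "P \<in> pairs V" for P
      using d1(3)[OF that] .
    show "mm P {b,x2} - mm P {a,x2} = - RR e P + (2 * ind (side e a) - 1) * CC e P" if "P \<in> pairs V" for P
      using d2(3)[OF that] sb by (simp add: algebra_simps)
    show "(\<Sum>i\<in>Idx. lam i * (phi i {a,x1} - phi i {b,x1})) = - lam (2,e) + (2 * ind (side e a) - 1) * lam (3,e)" for lam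
      using d1(4) .
    show "(\<Sum>i\<in>Idx. lam i * (phi i {b,x2} - phi i {a,x2})) = - lam (2,e) - (2 * ind (side e a) - 1) * lam (3,e)" for lam
      using d2(4)[of lam] sb by (simp add: algebra_simps)
  qed
qed

lemma indep_fun:
  assumes z: "\<And>P. P \<in> pairs V \<Longrightarrow> (\<Sum>i\<in>Idx. lam i * phi i P) = 0"
  shows "\<forall>i\<in>Idx. lam i = 0"
proof -
  have diffz: "(\<Sum>i\<in>Idx. lam i * (phi i f - phi i g)) = 0" if "f \<in> pairs V" "g \<in> pairs V" for f g
  proof -
    have "(\<Sum>i\<in>Idx. lam i * (phi i f - phi i g)) = (\<Sum>i\<in>Idx. lam i * phi i f) - (\<Sum>i\<in>Idx. lam i * phi i g)"
      by (simp add: algebra_simps sum_subtractf)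
    then show ?thesis using z that by simp
  qed
  have inn: "lam (2,e) = 0 \<and> lam (3,e) = 0" if e: "e \<in> Inn" for e
  proof -
    obtain f1 f2 f3 f4 c where d: "f1 \<in> pairs V" "f2 \<in> pairs V" "f3 \<in> pairs V" "f4 \<in> pairs V" "c * c = 1"
      "\<And>P. P \<in> pairs V \<Longrightarrow> mm P f1 - mm P f2 = - RR e P - c * CC e P"
      "\<And>P. P \<in> pairs V \<Longrightarrow> mm P f3 - mm P f4 = - RR e P + c * CC e P"
      "\<And>lam. (\<Sum>i\<in>Idx. lam i * (phi i f1 - phi i f2)) = - lam (2,e) + c * lam (3,e)"
      "\<And>lam. (\<Sum>i\<in>Idx. lam i * (phi i f3 - phi i f4)) = - lam (2,e) - c * lam (3,e)"
      using int_data[OF e] by blast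
    have h1: "- lam (2,e) + c * lam (3,e) = 0" using d(8)[of lam] diffz[OF d(1,2)] by simp
    have h2: "- lam (2,e) - c * lam (3,e) = 0" using d(9)[of lam] diffz[OF d(3,4)] by simp
    have "lam (2,e) = 0" using h1 h2 by simp
    moreover have "c * lam (3,e) = 0" using h1 h2 by simp
    then have "c * (c * lam (3,e)) = 0" by simp
    then have "lam (3,e) = 0" using d(5) by (simp add: mult.assoc[symmetric])
    ultimately show ?thesis by simp
  qed
  have red: "(\<Sum>i\<in>Idx. lam i * phi i P) = lam (0,{}) + lam (1,{}) * u0 P" for P
    unfolding sum_Idx phi_def using inn by simp
  obtain fa fb where f: "fa \<in> pairs V" "fb \<in> pairs V" "u0 fa \<noteq> u0 fb" using u0_distinct by blast
  have "lam (0,{}) + lam (1,{}) * u0 fa = 0" "lam (0,{}) + lam (1,{}) * u0 fb = 0" using z f red by auto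
  then have "lam (1,{}) * u0 fa = lam (1,{}) * u0 fb" by linarith
  then have "lam (1,{}) * (u0 fa - u0 fb) = 0" by (simp add: right_diff_distrib)
  then have l1: "lam (1,{}) = 0" using f(3) by simp
  then have l0: "lam (0,{}) = 0" using \<open>lam (0,{}) + lam (1,{}) * u0 fa = 0\<close> by simp
  show ?thesis unfolding Idx_def using l0 l1 inn by auto
qed

lemma mm_expand:
  assumes P: "P \<in> pairs V" and Q: "Q \<in> pairs V"
  shows "mm P Q = u0 P + u0 Q + card Inn + (\<Sum>e\<in>Inn. RR e Q * RR e P) - (\<Sum>e\<in>Inn. CC e Q * CC e P)"
  using m_decomp[OF P Q] unfolding sum_Idx phi_def by (simp add: sum_negf)

end

lemma (in vec_space) in_span_fun:
  assumes S: "S \<subseteq> carrier_vec n" and K: "finite K" and w: "\<And>k. k \<in> K \<Longrightarrow> w k \<in> span S"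
    and F: "\<And>r. r < n \<Longrightarrow> F r = (\<Sum>k\<in>K. cf k * w k $ r)"
  shows "vec n F \<in> span S"
proof -
  have "vec n F = vec n (\<lambda>r. \<Sum>k\<in>K. cf k * w k $ r)" using F by (intro eq_vecI) auto
  then show ?thesis using lc_in_span[OF S K w] by simp
qed

theorem theorem1:
  fixes V :: "'a set" and E :: "'a set set" and n p :: nat
  assumes "is_tree V E"
    and "card V = n" and "n \<ge> 3"
    and "card (pendant_vertices V E) = p"
  shows "real_mat_rank (Max4PC V E) = 2 * (n - p)"
proof -
  interpret tree3 V E using assms by (unfold_locales) auto
  define N where "N = card (pairs V)"
  define g where "g = enum_of (pairs V)"
  have finP: "finite (pairs V)"
  proof -
    have "pairs V \<subseteq> Pow V" unfolding pairs_def by auto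
    then show ?thesis using finV finite_subset by (metis finite_Pow_iff)
  qed
  have bij: "bij_betw g {0..<N} (pairs V)"
  proof -
    have "\<exists>f. bij_betw f {0..<card (pairs V)} (pairs V)" using ex_bij_betw_nat_finite[OF finP] .
    then show ?thesis unfolding g_def N_def enum_of_def by (rule someI_ex)
  qed
  have gP: "\<And>r. r < N \<Longrightarrow> g r \<in> pairs V" using bij unfolding bij_betw_def by auto
  define jj where "jj P = (SOME j. j < N \<and> g j = P)" for P
  have jj: "jj P < N \<and> g (jj P) = P" if "P \<in> pairs V" for P
  proof -
    have "P \<in> g ` {0..<N}" using bij that unfolding bij_betw_def by auto
    then have "\<exists>j. j < N \<and> g j = P" by auto
    then show ?thesis unfolding jj_def by (rule someI_ex)
  qed
  define M where "M = Max4PC V E"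
  have M: "M = mat N N (\<lambda>(i, j). mm (g i) (g j))" unfolding M_def Max4PC_def N_def g_def Let_def by simp
  have Mc: "M \<in> carrier_mat N N" using M by simp
  have rowM: "dim_row M = N" using M by simp
  interpret vs: vec_space "TYPE(real)" N .
  define vv where "vv i = vec N (\<lambda>r. phi i (g r))" for i
  have vvc: "\<And>i. vv i \<in> carrier_vec N" unfolding vv_def by simp
  have vvi: "\<And>i r. r < N \<Longrightarrow> vv i $ r = phi i (g r)" unfolding vv_def by simp
  have colM: "\<And>j. j < N \<Longrightarrow> col M j = vec N (\<lambda>r. mm (g r) (g j))" using M by simp
  define S where "S = set (cols M)"
  have Sc: "S \<subseteq> carrier_vec N" unfolding S_def using Mc cols_dim by blast
  have colS: "col M (jj P) \<in> vs.span S" if "P \<in> pairs V" for P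
  proof -
    have "col M (jj P) \<in> S" unfolding S_def using jj[OF that] Mc by (simp add: cols_def)
    then show ?thesis using vs.in_own_span[OF Sc] by blast
  qed
  have colSi: "col M (jj P) $ r = mm (g r) P" if "P \<in> pairs V" "r < N" for P r
    using jj[OF that(1)] colM that(2) by simp
  have inn_in: "vv (2,e) \<in> vs.span S \<and> vv (3,e) \<in> vs.span S" if e: "e \<in> Inn" for e
  proof -
    obtain f1 f2 f3 f4 c where d: "f1 \<in> pairs V" "f2 \<in> pairs V" "f3 \<in> pairs V" "f4 \<in> pairs V" "c * c = 1"
      "\<And>P. P \<in> pairs V \<Longrightarrow> mm P f1 - mm P f2 = - RR e P - c * CC e P"
      "\<And>P. P \<in> pairs V \<Longrightarrow> mm P f3 - mm P f4 = - RR e P + c * CC e P"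
      "\<And>lam. (\<Sum>i\<in>Idx. lam i * (phi i f1 - phi i f2)) = - lam (2,e) + c * lam (3,e)"
      "\<And>lam. (\<Sum>i\<in>Idx. lam i * (phi i f3 - phi i f4)) = - lam (2,e) - c * lam (3,e)"
      using int_data[OF e] by blast
    define w where "w k = col M (jj ([f1,f2,f3,f4] ! k))" for k
    have wS: "\<And>k. k \<in> {0::nat,1,2,3} \<Longrightarrow> w k \<in> vs.span S" unfolding w_def using colS d by auto
    have wi: "w 0 $ r = mm (g r) f1" "w 1 $ r = mm (g r) f2" "w 2 $ r = mm (g r) f3" "w 3 $ r = mm (g r) f4"
      if "r < N" for r
      unfolding w_def using colSi d that by (simp_all add: numeral_eq_Suc)
    have "vv (2,e) \<in> vs.span S"
      unfolding vv_def
    proof (rule vs.in_span_fun[OF Sc _ wS, where cf = "\<lambda>k. if k = 0 then -1/2 else if k = 1 then 1/2 else if k = 2 then -1/2 else 1/2"])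
      fix r assume r: "r < N"
      have "RR e (g r) = -1/2 * mm (g r) f1 + 1/2 * mm (g r) f2 + -1/2 * mm (g r) f3 + 1/2 * mm (g r) f4"
        using d(6)[OF gP[OF r]] d(7)[OF gP[OF r]] by (simp add: field_simps)
      then show "phi (2, e) (g r) = (\<Sum>k\<in>{0::nat,1,2,3}. (if k = 0 then -1/2 else if k = 1 then 1/2 else if k = 2 then -1/2 else 1/2) * w k $ r)"
        unfolding phi_def using wi[OF r] by simp
    qed simp
    moreover have "vv (3,e) \<in> vs.span S"
      unfolding vv_def
    proof (rule vs.in_span_fun[OF Sc _ wS, where cf = "\<lambda>k. if k = 0 then -c/2 else if k = 1 then c/2 else if k = 2 then c/2 else -c/2"])
      fix r assume r: "r < N"
      have "(mm (g r) f3 - mm (g r) f4) - (mm (g r) f1 - mm (g r) f2) = (- RR e (g r) + c * CC e (g r)) - (- RR e (g r) - c * CC e (g r))"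
        unfolding d(6)[OF gP[OF r]] d(7)[OF gP[OF r]] ..
      then have "(mm (g r) f3 - mm (g r) f4) - (mm (g r) f1 - mm (g r) f2) = 2 * (c * CC e (g r))"
        by simp
      then have "c * ((mm (g r) f3 - mm (g r) f4) - (mm (g r) f1 - mm (g r) f2)) = c * (2 * (c * CC e (g r)))"
        by simp
      then have "c * (mm (g r) f3 - mm (g r) f4) - c * (mm (g r) f1 - mm (g r) f2) = 2 * (c * c) * CC e (g r)"
        by (simp add: algebra_simps)
      then have "CC e (g r) = -c/2 * mm (g r) f1 + c/2 * mm (g r) f2 + c/2 * mm (g r) f3 + -c/2 * mm (g r) f4"
        using d(5) by (simp add: field_simps)
      then show "phi (3, e) (g r) = (\<Sum>k\<in>{0::nat,1,2,3}. (if k = 0 then -c/2 else if k = 1 then c/2 else if k = 2 then c/2 else -c/2) * w k $ r)"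
        unfolding phi_def using wi[OF r] by simp
    qed simp
    ultimately show ?thesis by simp
  qed
  obtain fa fb where f: "fa \<in> pairs V" "fb \<in> pairs V" "u0 fa \<noteq> u0 fb" using u0_distinct by blast
  define \<Delta> where "\<Delta> = u0 fa - u0 fb"
  have \<Delta>: "\<Delta> \<noteq> 0" using f(3) unfolding \<Delta>_def by simp
  have one_in: "vv (0,{}) \<in> vs.span S"
  proof -
    define w where "w i = (if fst i = 0 then col M (jj fa) else if fst i = 1 then col M (jj fb) else vv i)" for i
    have wS: "\<And>i. i \<in> Idx \<Longrightarrow> w i \<in> vs.span S" unfolding w_def Idx_def using colS f inn_in by auto
    show ?thesis unfolding vv_def
    proof (rule vs.in_span_fun[OF Sc finIdx wS, where cf = "\<lambda>i. if fst i = 0 then 1/\<Delta> else if fst i = 1 then -1/\<Delta>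
        else if fst i = 2 then - (RR (snd i) fa - RR (snd i) fb)/\<Delta> else (CC (snd i) fa - CC (snd i) fb)/\<Delta>"])
      fix r assume r: "r < N"
      have ea: "mm (g r) fa - mm (g r) fb = \<Delta> + (\<Sum>e\<in>Inn. (RR e fa - RR e fb) * RR e (g r)) - (\<Sum>e\<in>Inn. (CC e fa - CC e fb) * CC e (g r))"
      proof -
        have s1: "(\<Sum>e\<in>Inn. (RR e fa - RR e fb) * RR e (g r)) = (\<Sum>e\<in>Inn. RR e fa * RR e (g r)) - (\<Sum>e\<in>Inn. RR e fb * RR e (g r))"
          by (simp add: sum_subtractf left_diff_distrib)
        have s2: "(\<Sum>e\<in>Inn. (CC e fa - CC e fb) * CC e (g r)) = (\<Sum>e\<in>Inn. CC e fa * CC e (g r)) - (\<Sum>e\<in>Inn. CC e fb * CC e (g r))"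
          by (simp add: sum_subtractf left_diff_distrib)
        show ?thesis using mm_expand[OF gP[OF r] f(1)] mm_expand[OF gP[OF r] f(2)] s1 s2 unfolding \<Delta>_def
          by linarith
      qed
      have "1 = (mm (g r) fa - mm (g r) fb - (\<Sum>e\<in>Inn. (RR e fa - RR e fb) * RR e (g r)) + (\<Sum>e\<in>Inn. (CC e fa - CC e fb) * CC e (g r))) / \<Delta>"
        using ea \<Delta> by simp
      also have "\<dots> = 1/\<Delta> * mm (g r) fa + -1/\<Delta> * mm (g r) fb + (\<Sum>e\<in>Inn. - (RR e fa - RR e fb)/\<Delta> * RR e (g r)) + (\<Sum>e\<in>Inn. (CC e fa - CC e fb)/\<Delta> * CC e (g r))"
      proof -
        have t1: "(\<Sum>e\<in>Inn. - (RR e fa - RR e fb)/\<Delta> * RR e (g r)) = - (\<Sum>e\<in>Inn. (RR e fa - RR e fb) * RR e (g r)) / \<Delta>"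
        proof -
          have "(\<Sum>e\<in>Inn. - (RR e fa - RR e fb)/\<Delta> * RR e (g r)) = (\<Sum>e\<in>Inn. - ((RR e fa - RR e fb) * RR e (g r)) / \<Delta>)"
            by (intro sum.cong refl) (simp add: field_simps \<Delta>)
          also have "\<dots> = - (\<Sum>e\<in>Inn. (RR e fa - RR e fb) * RR e (g r)) / \<Delta>"
            by (simp add: sum_divide_distrib[symmetric] sum_negf)
          finally show ?thesis .
        qed
        have t2: "(\<Sum>e\<in>Inn. (CC e fa - CC e fb)/\<Delta> * CC e (g r)) = (\<Sum>e\<in>Inn. (CC e fa - CC e fb) * CC e (g r)) / \<Delta>"
        proof -
          have "(\<Sum>e\<in>Inn. (CC e fa - CC e fb)/\<Delta> * CC e (g r)) = (\<Sum>e\<in>Inn. ((CC e fa - CC e fb) * CC e (g r)) / \<Delta>)"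
            by (intro sum.cong refl) (simp add: field_simps \<Delta>)
          also have "\<dots> = (\<Sum>e\<in>Inn. (CC e fa - CC e fb) * CC e (g r)) / \<Delta>"
            by (simp add: sum_divide_distrib[symmetric])
          finally show ?thesis .
        qed
        show ?thesis unfolding t1 t2 by (simp add: add_divide_distrib diff_divide_distrib)
      qed
      finally show "phi (0, {}) (g r) = (\<Sum>i\<in>Idx. (if fst i = 0 then 1/\<Delta> else if fst i = 1 then -1/\<Delta>
        else if fst i = 2 then - (RR (snd i) fa - RR (snd i) fb)/\<Delta> else (CC (snd i) fa - CC (snd i) fb)/\<Delta>) * w i $ r)"
        unfolding sum_Idx w_def phi_def using colSi[OF f(1) r] colSi[OF f(2) r] vvi[OF r] by (simp add: phi_def)
    qed
  qed
  have u0_in: "vv (1,{}) \<in> vs.span S"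
  proof -
    define w where "w i = (if fst i = 0 then col M (jj fa) else if fst i = 1 then vv (0,{}) else vv i)" for i
    have wS: "\<And>i. i \<in> Idx \<Longrightarrow> w i \<in> vs.span S" unfolding w_def Idx_def using colS f inn_in one_in by auto
    show ?thesis unfolding vv_def
    proof (rule vs.in_span_fun[OF Sc finIdx wS, where cf = "\<lambda>i. if fst i = 0 then 1 else if fst i = 1 then - (u0 fa + card Inn)
        else if fst i = 2 then - RR (snd i) fa else CC (snd i) fa"])
      fix r assume r: "r < N"
      have "u0 (g r) = mm (g r) fa - (u0 fa + card Inn) - (\<Sum>e\<in>Inn. RR e fa * RR e (g r)) + (\<Sum>e\<in>Inn. CC e fa * CC e (g r))"
        using mm_expand[OF gP[OF r] f(1)] by simp
      then show "phi (1, {}) (g r) = (\<Sum>i\<in>Idx. (if fst i = 0 then 1 else if fst i = 1 then - (u0 fa + card Inn)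
        else if fst i = 2 then - RR (snd i) fa else CC (snd i) fa) * w i $ r)"
        unfolding sum_Idx w_def using colSi[OF f(1) r] vvi[OF r] by (simp add: phi_def sum_negf)
    qed
  qed
  have rank: "vs.rank M = card Idx"
  proof (rule vs.rank_via_family[OF Mc finIdx vvc])
    fix j assume j: "j < N"
    have sub: "vv ` Idx \<subseteq> carrier_vec N" using vvc by auto
    have "\<And>i. i \<in> Idx \<Longrightarrow> vv i \<in> vs.span (vv ` Idx)" using vs.in_own_span[OF sub] by blast
    then have "vec N (\<lambda>r. mm (g r) (g j)) \<in> vs.span (vv ` Idx)"
    proof (rule vs.in_span_fun[OF sub finIdx, where cf = "\<lambda>i. if fst i = 0 then u0 (g j) + card Inn else if fst i = 1 then 1
                    else if fst i = 2 then RR (snd i) (g j) else - CC (snd i) (g j)"])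
      fix r assume r: "r < N"
      show "mm (g r) (g j) = (\<Sum>i\<in>Idx. (if fst i = 0 then u0 (g j) + card Inn else if fst i = 1 then 1
                    else if fst i = 2 then RR (snd i) (g j) else - CC (snd i) (g j)) * vv i $ r)"
        using m_decomp[OF gP[OF r] gP[OF j]] vvi[OF r] by simp
    qed
    then show "col M j \<in> vs.span (vv ` Idx)" using colM[OF j] by simp
  next
    fix i assume i: "i \<in> Idx"
    then show "vv i \<in> vs.span (set (cols M))"
      using one_in u0_in inn_in unfolding S_def Idx_def by auto
  next
    fix lam assume z: "vec N (\<lambda>r. \<Sum>i\<in>Idx. lam i * vv i $ r) = 0\<^sub>v N"
    have "(\<Sum>i\<in>Idx. lam i * phi i P) = 0" if P: "P \<in> pairs V" for P
    proof -
      have r: "jj P < N" "g (jj P) = P" using jj[OF P] by auto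
      have "vec N (\<lambda>r. \<Sum>i\<in>Idx. lam i * vv i $ r) $ jj P = 0" using z r by simp
      then show ?thesis using r vvi by simp
    qed
    then show "\<forall>i\<in>Idx. lam i = 0" by (rule indep_fun)
  qed
  have cE: "card E = n - 1" using card_E assms by simp
  have cP: "card Pend = p" using card_Pend card3 assms by simp
  have pn: "p \<le> n - 1" using Pend_le cE cP by simp
  have cI: "card Inn = n - 1 - p" using card_Inn card3 assms by simp
  have "real_mat_rank (Max4PC V E) = vs.rank M" unfolding real_mat_rank_def M_def[symmetric] rowM ..
  also have "\<dots> = 2 + 2 * (n - 1 - p)" using rank card_Idx cI by simp
  also have "\<dots> = 2 * (n - p)" using pn assms(3) by simp
  finally show ?thesis .
qed


end
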